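(* Let $A$ be an associative ring, not necessarily commutative and not necessarily unital, and let $n\ge 2$. Then the assignment $y_i^a\mapsto x_{i\,i+1}^a\,y_i$ ($1\le i\le n-1$, $a\in A$) induces a well-defined map $$\phi: Br_n(A)\longrightarrow St_n(A)\rtimes Br_n,$$ and $\phi$ is an isomorphism of groups.
   Context: The parametrized braid group $Br_n(A)$ is the group generated by elements $y_i^a$, $1\le i\le n-1$, $a\in A$, subject to the relations, for all $a,b,c\in A$: (A1) $y_i^a y_i^0 y_i^b = y_i^0 y_i^0 y_i^{a+b}$; (A1$\times$A1) $y_i^a y_j^b = y_j^b y_i^a$ if $|i-j|\ge 2$; (A2) $y_i^a y_{i+1}^b y_i^c = y_{i+1}^c\, y_i^{b+ac}\, y_{i+1}^a$. $Br_n$ denotes the Artin braid group, with generators $y_1,\dots,y_{n-1}$ and relations $y_iy_j=y_jy_i$ for $|i-j|\ge2$ and $y_iy_{i+1}y_i=y_{i+1}y_iy_{i+1}$; it maps onto the symmetric group $\mathcal S_n$ via $y_i\mapsto$ the transposition $(i\ i+1)$. The Steinberg group $St_n(A)$ is generated by $x_{ij}^a$, $1\le i,j\le n$, $i\ne j$, $a\in A$, subject to: $x_{ij}^a x_{ij}^b = x_{ij}^{a+b}$; $x_{ij}^a x_{kl}^b = x_{kl}^b x_{ij}^a$ for $i\ne l$, $j\ne k$; $x_{ij}^a x_{jk}^b = x_{jk}^b x_{ik}^{ab} x_{ij}^a$ for $i\ne k$. The braid group $Br_n$ acts on $St_n(A)$ through $\mathcal S_n$ by $\sigma\cdot x_{ij}^a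 = x_{\sigma(i)\sigma(j)}^a$, and $St_n(A)\rtimes Br_n$ is the semidirect product for this action. *)

theory Defs
  imports "HOL-Algebra.Group" "HOL-Combinatorics.Transposition"
begin

text \<open>A letter is a pair (g, b): b = True means the generator g, b = False its formal
inverse.\<close>

type_synonym 'g word = "('g \<times> bool) list"

inductive_set pres_eq :: "'g set \<Rightarrow> ('g word \<times> 'g word) set \<Rightarrow> ('g word \<times> 'g word) set"
  for S :: "'g set" and R :: "('g word \<times> 'g word) set" where
  refl: "w \<in> lists (S \<times> UNIV) \<Longrightarrow> (w, w) \<in> pres_eq S R"
| sym: "(u, v) \<in> pres_eq S R \<Longrightarrow> (v, u) \<in> pres_eq S R"
| trans: "(u, v) \<in> pres_eq S R \<Longrightarrow> (v, w) \<in> pres_eq S R \<Longrightarrow> (u, w) \<in> pres_eq S R"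
| rel: "(u, v) \<in> R \<Longrightarrow> u \<in> lists (S \<times> UNIV) \<Longrightarrow> v \<in> lists (S \<times> UNIV) \<Longrightarrow> (u, v) \<in> pres_eq S R"
| cancel: "g \<in> S \<Longrightarrow> ([(g, b), (g, \<not> b)], []) \<in> pres_eq S R"
| cong: "(u, v) \<in> pres_eq S R \<Longrightarrow> w \<in> lists (S \<times> UNIV) \<Longrightarrow> z \<in> lists (S \<times> UNIV) \<Longrightarrow>
         (w @ u @ z, w @ v @ z) \<in> pres_eq S R"

definition word_class :: "'g set \<Rightarrow> ('g word \<times> 'g word) set \<Rightarrow> 'g word \<Rightarrow> 'g word set" where
  "word_class S R w = pres_eq S R `` {w}"

definition rep :: "'g word set \<Rightarrow> 'g word" where
  "rep X = (SOME w. w \<in> X)"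

definition presented_group :: "'g set \<Rightarrow> ('g word \<times> 'g word) set \<Rightarrow> 'g word set monoid" where
  "presented_group S R =
     \<lparr> carrier = lists (S \<times> UNIV) // pres_eq S R,
       monoid.mult = (\<lambda>X Y. word_class S R (rep X @ rep Y)),
       one = word_class S R [] \<rparr>"

fun word_eval :: "('b, 'c) monoid_scheme \<Rightarrow> ('g \<Rightarrow> 'b) \<Rightarrow> 'g word \<Rightarrow> 'b" where
  "word_eval G f [] = \<one>\<^bsub>G\<^esub>"
| "word_eval G f ((g, b) # w) =
     (if b then f g else inv\<^bsub>G\<^esub> (f g)) \<otimes>\<^bsub>G\<^esub> word_eval G f w"

text \<open>Generator (i, a) stands for \<open>y_i^a\<close>.\<close>
definition brA_gens :: "nat \<Rightarrow> (nat \<times> 'a) set" where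
  "brA_gens n = {(i, a). 1 \<le> i \<and> i \<le> n - 1}"

definition brA_rels :: "nat \<Rightarrow> ((nat \<times> 'a::ring) word \<times> (nat \<times> 'a) word) set" where
  "brA_rels n =
     {([((i, a), True), ((i, 0), True), ((i, b), True)],
       [((i, 0), True), ((i, 0), True), ((i, a + b), True)]) | i a b. 1 \<le> i \<and> i \<le> n - 1}
   \<union> {([((i, a), True), ((j, b), True)], [((j, b), True), ((i, a), True)]) | i j a b.
        1 \<le> i \<and> i \<le> n - 1 \<and> 1 \<le> j \<and> j \<le> n - 1 \<and> (i + 2 \<le> j \<or> j + 2 \<le> i)}
   \<union> {([((i, a), True), ((i + 1, b), True), ((i, c), True)],
        [((i + 1, c), True), ((i, b + a * c), True), ((i + 1, a), True)]) | i a b c.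
        1 \<le> i \<and> i + 1 \<le> n - 1}"

definition BrA :: "nat \<Rightarrow> (nat \<times> 'a::ring) word set monoid" where
  "BrA n = presented_group (brA_gens n) (brA_rels n)"

text \<open>Generator i stands for \<open>y_i\<close>.\<close>
definition br_gens :: "nat \<Rightarrow> nat set" where
  "br_gens n = {i. 1 \<le> i \<and> i \<le> n - 1}"

definition br_rels :: "nat \<Rightarrow> (nat word \<times> nat word) set" where
  "br_rels n =
     {([(i, True), (j, True)], [(j, True), (i, True)]) | i j.
        1 \<le> i \<and> i \<le> n - 1 \<and> 1 \<le> j \<and> j \<le> n - 1 \<and> (i + 2 \<le> j \<or> j + 2 \<le> i)}
   \<union> {([(i, True), (i + 1, True), (i, True)], [(i + 1, True), (i, True), (i + 1, True)]) | i.
        1 \<le> i \<and> i + 1 \<le> n - 1}"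

definition Br :: "nat \<Rightarrow> nat word set monoid" where
  "Br n = presented_group (br_gens n) (br_rels n)"

text \<open>The permutation of \<open>{1..n}\<close> attached to a braid word, via \<open>y_i \<mapsto> (i i+1)\<close>
  (product read as composition of maps, so it is a homomorphism for left actions).\<close>
fun perm_of_word :: "nat word \<Rightarrow> nat \<Rightarrow> nat" where
  "perm_of_word [] = id"
| "perm_of_word ((i, b) # w) = Transposition.transpose i (i + 1) \<circ> perm_of_word w"

definition perm_of_braid :: "nat word set \<Rightarrow> nat \<Rightarrow> nat" where
  "perm_of_braid B = perm_of_word (rep B)"

text \<open>Generator (i, j, a) stands for \<open>x_{ij}^a\<close>.\<close>
definition st_gens :: "nat \<Rightarrow> (nat \<times> nat \<times> 'a) set" where
  "st_gens n = {(i, j, a). 1 \<le> i \<and> i \<le> n \<and> 1 \<le> j \<and> j \<le> n \<and> i \<noteq> j}"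

definition st_rels :: "nat \<Rightarrow> ((nat \<times> nat \<times> 'a::ring) word \<times> (nat \<times> nat \<times> 'a) word) set" where
  "st_rels n =
     {([((i, j, a), True), ((i, j, b), True)], [((i, j, a + b), True)]) | i j a b.
        (i, j, a) \<in> st_gens n}
   \<union> {([((i, j, a), True), ((k, l, b), True)], [((k, l, b), True), ((i, j, a), True)]) | i j k l a b.
        (i, j, a) \<in> st_gens n \<and> (k, l, b) \<in> st_gens n \<and> i \<noteq> l \<and> j \<noteq> k}
   \<union> {([((i, j, a), True), ((j, k, b), True)],
        [((j, k, b), True), ((i, k, a * b), True), ((i, j, a), True)]) | i j k a b.
        (i, j, a) \<in> st_gens n \<and> (j, k, b) \<in> st_gens n \<and> i \<noteq> k}"

definition St :: "nat \<Rightarrow> (nat \<times> nat \<times> 'a::ring) word set monoid" where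
  "St n = presented_group (st_gens n) (st_rels n)"

definition st_act :: "nat \<Rightarrow> (nat \<Rightarrow> nat) \<Rightarrow> (nat \<times> nat \<times> 'a::ring) word set \<Rightarrow> (nat \<times> nat \<times> 'a) word set" where
  "st_act n \<sigma> X = word_class (st_gens n) (st_rels n)
      (map (\<lambda>((i, j, a), b). ((\<sigma> i, \<sigma> j, a), b)) (rep X))"

definition StBr :: "nat \<Rightarrow> ((nat \<times> nat \<times> 'a::ring) word set \<times> nat word set) monoid" where
  "StBr n =
     \<lparr> carrier = carrier (St n) \<times> carrier (Br n),
       monoid.mult = (\<lambda>(s, b) (s', b').
          (s \<otimes>\<^bsub>St n\<^esub> st_act n (perm_of_braid b) s', b \<otimes>\<^bsub>Br n\<^esub> b')),
       one = (\<one>\<^bsub>St n\<^esub>, \<one>\<^bsub>Br n\<^esub>) \<rparr>"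

definition phi_gen :: "nat \<Rightarrow> nat \<times> 'a::ring \<Rightarrow> (nat \<times> nat \<times> 'a) word set \<times> nat word set" where
  "phi_gen n = (\<lambda>(i, a).
     (word_class (st_gens n) (st_rels n) [((i, i + 1, a), True)], \<one>\<^bsub>Br n\<^esub>)
     \<otimes>\<^bsub>StBr n\<^esub> (\<one>\<^bsub>St n\<^esub>, word_class (br_gens n) (br_rels n) [(i, True)]))"

definition phi :: "nat \<Rightarrow> (nat \<times> 'a::ring) word set \<Rightarrow> (nat \<times> nat \<times> 'a) word set \<times> nat word set" where
  "phi n X = word_eval (StBr n) (phi_gen n) (rep X)"

end

theory Submission
  imports Defs
begin


section \<open>Generic presented groups\<close>

lemma pres_eq_lists:
  "(u, v) \<in> pres_eq S R \<Longrightarrow> u \<in> lists (S \<times> UNIV) \<and> v \<in> lists (S \<times> UNIV)"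
  by (induction rule: pres_eq.induct) auto

definition winv :: "'g word \<Rightarrow> 'g word" where
  "winv w = rev (map (\<lambda>(g, b). (g, \<not> b)) w)"

lemma winv_Cons [simp]: "winv ((g, b) # w) = winv w @ [(g, \<not> b)]"
  by (simp add: winv_def)

lemma winv_Nil [simp]: "winv [] = []"
  by (simp add: winv_def)

lemma winv_lists: "w \<in> lists (S \<times> UNIV) \<Longrightarrow> winv w \<in> lists (S \<times> UNIV)"
  by (induction w) (auto simp: winv_def)

lemma winv_winv [simp]: "winv (winv w) = w"
  by (induction w) (auto simp: winv_def rev_map comp_def)

lemma pres_eq_cong2:
  assumes "(u, u') \<in> pres_eq S R" "(v, v') \<in> pres_eq S R"
  shows "(u @ v, u' @ v') \<in> pres_eq S R"
proof -
  from assms have l: "u \<in> lists (S \<times> UNIV)" "u' \<in> lists (S \<times> UNIV)"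
    "v \<in> lists (S \<times> UNIV)" "v' \<in> lists (S \<times> UNIV)"
    using pres_eq_lists by blast+
  have "([] @ u @ v, [] @ u' @ v) \<in> pres_eq S R"
    by (rule pres_eq.cong[OF assms(1)]) (use l in auto)
  moreover have "(u' @ v @ [], u' @ v' @ []) \<in> pres_eq S R"
    by (rule pres_eq.cong[OF assms(2)]) (use l in auto)
  ultimately show ?thesis by (auto intro: pres_eq.trans)
qed

lemma winv_cancel_r:
  "w \<in> lists (S \<times> UNIV) \<Longrightarrow> (w @ winv w, []) \<in> pres_eq S R"
proof (induction w)
  case Nil
  then show ?case by (auto intro: pres_eq.refl)
next
  case (Cons x w)
  obtain g b where x: "x = (g, b)" by force
  have g: "g \<in> S" using Cons.prems x by auto
  have wl: "w \<in> lists (S \<times> UNIV)" using Cons.prems by auto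
  have "([(g, b)] @ (w @ winv w) @ [(g, \<not> b)], [(g, b)] @ [] @ [(g, \<not> b)]) \<in> pres_eq S R"
    by (rule pres_eq.cong[OF Cons.IH[OF wl]]) (use g in auto)
  moreover have "([(g, b), (g, \<not> b)], []) \<in> pres_eq S R"
    by (rule pres_eq.cancel[OF g])
  ultimately show ?case using x by (auto intro: pres_eq.trans)
qed

lemma winv_cancel_l:
  "w \<in> lists (S \<times> UNIV) \<Longrightarrow> (winv w @ w, []) \<in> pres_eq S R"
  using winv_cancel_r[of "winv w" S R] winv_lists[of w S] by simp

lemma pres_eq_equiv: "equiv (lists (S \<times> UNIV)) (pres_eq S R)"
proof (rule equivI)
  show "refl_on (lists (S \<times> UNIV)) (pres_eq S R)"
    unfolding refl_on_def using pres_eq_lists pres_eq.refl by fast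
  show "sym (pres_eq S R)" unfolding sym_def using pres_eq.sym by blast
  show "trans (pres_eq S R)" unfolding trans_def using pres_eq.trans by blast
  show "pres_eq S R \<subseteq> lists (S \<times> UNIV) \<times> lists (S \<times> UNIV)" using pres_eq_lists by fast
qed

lemma word_class_eq_iff:
  "u \<in> lists (S \<times> UNIV) \<Longrightarrow> v \<in> lists (S \<times> UNIV) \<Longrightarrow>
   word_class S R u = word_class S R v \<longleftrightarrow> (u, v) \<in> pres_eq S R"
  unfolding word_class_def using equiv_class_eq_iff[OF pres_eq_equiv] by blast

lemma word_class_eqI:
  "(u, v) \<in> pres_eq S R \<Longrightarrow> word_class S R u = word_class S R v"
  using word_class_eq_iff pres_eq_lists by blast

lemma word_class_self: "w \<in> lists (S \<times> UNIV) \<Longrightarrow> w \<in> word_class S R w"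
  unfolding word_class_def by (auto intro: pres_eq.refl)

lemma rep_class: "w \<in> lists (S \<times> UNIV) \<Longrightarrow> (w, rep (word_class S R w)) \<in> pres_eq S R"
proof -
  assume w: "w \<in> lists (S \<times> UNIV)"
  have "rep (word_class S R w) \<in> word_class S R w"
    unfolding rep_def by (rule someI, rule word_class_self[OF w])
  then show ?thesis unfolding word_class_def by auto
qed

lemma rep_class_lists: "w \<in> lists (S \<times> UNIV) \<Longrightarrow> rep (word_class S R w) \<in> lists (S \<times> UNIV)"
  using rep_class pres_eq_lists by blast

lemma class_rep: "w \<in> lists (S \<times> UNIV) \<Longrightarrow> word_class S R (rep (word_class S R w)) = word_class S R w"
  using rep_class word_class_eqI pres_eq.sym by metis

lemma carrier_pres: "carrier (presented_group S R) = lists (S \<times> UNIV) // pres_eq S R"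
  by (simp add: presented_group_def)

lemma carrier_presE:
  assumes "X \<in> carrier (presented_group S R)"
  obtains w where "w \<in> lists (S \<times> UNIV)" "X = word_class S R w"
  using assms unfolding carrier_pres word_class_def quotient_def by blast

lemma class_in_carrier:
  "w \<in> lists (S \<times> UNIV) \<Longrightarrow> word_class S R w \<in> carrier (presented_group S R)"
  unfolding carrier_pres word_class_def by (auto intro: quotientI)

lemma mult_class:
  "u \<in> lists (S \<times> UNIV) \<Longrightarrow> v \<in> lists (S \<times> UNIV) \<Longrightarrow>
   word_class S R u \<otimes>\<^bsub>presented_group S R\<^esub> word_class S R v = word_class S R (u @ v)"
  unfolding presented_group_def
  by (simp, rule word_class_eqI, rule pres_eq.sym, rule pres_eq_cong2; rule rep_class)

lemma one_pres: "\<one>\<^bsub>presented_group S R\<^esub> = word_class S R []"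
  by (simp add: presented_group_def)

lemma group_pres: "group (presented_group S R)"
proof (rule groupI)
  fix x y assume "x \<in> carrier (presented_group S R)" "y \<in> carrier (presented_group S R)"
  then obtain u v where "u \<in> lists (S \<times> UNIV)" "v \<in> lists (S \<times> UNIV)"
    "x = word_class S R u" "y = word_class S R v" by (metis carrier_presE)
  then show "x \<otimes>\<^bsub>presented_group S R\<^esub> y \<in> carrier (presented_group S R)"
    by (simp add: mult_class class_in_carrier)
next
  show "\<one>\<^bsub>presented_group S R\<^esub> \<in> carrier (presented_group S R)"
    by (simp add: one_pres class_in_carrier)
next
  fix x y z assume "x \<in> carrier (presented_group S R)" "y \<in> carrier (presented_group S R)"
    "z \<in> carrier (presented_group S R)"
  then obtain u v w where "u \<in> lists (S \<times> UNIV)" "v \<in> lists (S \<times> UNIV)" "w \<in> lists (S \<times> UNIV)"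
    "x = word_class S R u" "y = word_class S R v" "z = word_class S R w" by (metis carrier_presE)
  then show "x \<otimes>\<^bsub>presented_group S R\<^esub> y \<otimes>\<^bsub>presented_group S R\<^esub> z =
    x \<otimes>\<^bsub>presented_group S R\<^esub> (y \<otimes>\<^bsub>presented_group S R\<^esub> z)"
    by (simp add: mult_class)
next
  fix x assume "x \<in> carrier (presented_group S R)"
  then obtain u where "u \<in> lists (S \<times> UNIV)" "x = word_class S R u" by (metis carrier_presE)
  then show "\<one>\<^bsub>presented_group S R\<^esub> \<otimes>\<^bsub>presented_group S R\<^esub> x = x"
    by (simp add: one_pres mult_class)
next
  fix x assume "x \<in> carrier (presented_group S R)"
  then obtain u where u: "u \<in> lists (S \<times> UNIV)" "x = word_class S R u" by (metis carrier_presE)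
  show "\<exists>y\<in>carrier (presented_group S R). y \<otimes>\<^bsub>presented_group S R\<^esub> x = \<one>\<^bsub>presented_group S R\<^esub>"
    apply (rule bexI[of _ "word_class S R (winv u)"])
    using u winv_lists[OF u(1)] winv_cancel_l[OF u(1)]
    by (auto simp: mult_class one_pres class_in_carrier intro!: word_class_eqI)
qed

lemma word_eval_closed:
  "group K \<Longrightarrow> f ` S \<subseteq> carrier K \<Longrightarrow> w \<in> lists (S \<times> UNIV) \<Longrightarrow> word_eval K f w \<in> carrier K"
  by (induction w) (auto simp: group.inv_closed monoid.m_closed group.is_monoid)

lemma word_eval_append:
  assumes "group K" "f ` S \<subseteq> carrier K" "u \<in> lists (S \<times> UNIV)" "v \<in> lists (S \<times> UNIV)"
  shows "word_eval K f (u @ v) = word_eval K f u \<otimes>\<^bsub>K\<^esub> word_eval K f v"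
  using assms(3)
proof (induction u)
  case Nil
  then show ?case using word_eval_closed[OF assms(1,2,4)] assms(1) by (simp add: group.is_monoid)
next
  case (Cons x u)
  then obtain g b where x: "x = (g, b)" "g \<in> S" by auto
  have c: "f g \<in> carrier K" "inv\<^bsub>K\<^esub> f g \<in> carrier K" using assms x by (auto simp: group.inv_closed)
  show ?case using Cons word_eval_closed[OF assms(1,2)] assms(4) c x
    by (auto simp: monoid.m_assoc group.is_monoid[OF assms(1)])
qed

definition rels_hold :: "('b, 'c) monoid_scheme \<Rightarrow> ('g \<Rightarrow> 'b) \<Rightarrow> 'g set \<Rightarrow> ('g word \<times> 'g word) set \<Rightarrow> bool" where
  "rels_hold K f S R \<longleftrightarrow> (\<forall>(u, v) \<in> R. u \<in> lists (S \<times> UNIV) \<longrightarrow> v \<in> lists (S \<times> UNIV) \<longrightarrow>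
      word_eval K f u = word_eval K f v)"

lemma word_eval_pres_eq:
  assumes "(u, v) \<in> pres_eq S R" "group K" "f ` S \<subseteq> carrier K" "rels_hold K f S R"
  shows "word_eval K f u = word_eval K f v"
  using assms(1)
proof (induction rule: pres_eq.induct)
  case (rel u v)
  then show ?case using assms(4) unfolding rels_hold_def by blast
next
  case (cancel g b)
  have c: "f g \<in> carrier K" using assms cancel by auto
  then show ?case using assms(2)
    by (cases b) (auto simp: group.l_inv group.r_inv group.inv_closed group.is_monoid monoid.r_one)
next
  case (cong u v w z)
  have l: "u \<in> lists (S \<times> UNIV)" "v \<in> lists (S \<times> UNIV)" using cong pres_eq_lists by blast+
  then show ?case using cong word_eval_append[OF assms(2,3)] by simp
qed auto

definition pres_map :: "('b, 'c) monoid_scheme \<Rightarrow> ('g \<Rightarrow> 'b) \<Rightarrow> 'g word set \<Rightarrow> 'b" where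
  "pres_map K f X = word_eval K f (rep X)"

lemma pres_map_class:
  assumes "group K" "f ` S \<subseteq> carrier K" "rels_hold K f S R" "w \<in> lists (S \<times> UNIV)"
  shows "pres_map K f (word_class S R w) = word_eval K f w"
  unfolding pres_map_def using word_eval_pres_eq[OF pres_eq.sym[OF rep_class[OF assms(4)]] assms(1-3)] .

lemma pres_map_hom:
  assumes "group K" "f ` S \<subseteq> carrier K" "rels_hold K f S R"
  shows "pres_map K f \<in> hom (presented_group S R) K"
proof (rule homI)
  fix x assume "x \<in> carrier (presented_group S R)"
  then obtain u where "u \<in> lists (S \<times> UNIV)" "x = word_class S R u" by (metis carrier_presE)
  then show "pres_map K f x \<in> carrier K"
    using pres_map_class[OF assms] word_eval_closed[OF assms(1,2)] by simp
next
  fix x y assume "x \<in> carrier (presented_group S R)" "y \<in> carrier (presented_group S R)"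
  then obtain u v where "u \<in> lists (S \<times> UNIV)" "v \<in> lists (S \<times> UNIV)"
    "x = word_class S R u" "y = word_class S R v" by (metis carrier_presE)
  then show "pres_map K f (x \<otimes>\<^bsub>presented_group S R\<^esub> y) = pres_map K f x \<otimes>\<^bsub>K\<^esub> pres_map K f y"
    using pres_map_class[OF assms] word_eval_append[OF assms(1,2)] by (simp add: mult_class)
qed

definition gen :: "'g set \<Rightarrow> ('g word \<times> 'g word) set \<Rightarrow> 'g \<Rightarrow> 'g word set" where
  "gen S R g = word_class S R [(g, True)]"

lemma gen_inv:
  assumes "g \<in> S"
  shows "inv\<^bsub>presented_group S R\<^esub> gen S R g = word_class S R [(g, False)]"
proof -
  interpret group "presented_group S R" by (rule group_pres)
  have "word_class S R [(g, False)] \<otimes>\<^bsub>presented_group S R\<^esub> gen S R g = \<one>\<^bsub>presented_group S R\<^esub>"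
    unfolding gen_def one_pres using assms
    by (subst mult_class) (auto intro!: word_class_eqI pres_eq.cancel[of g S False R, simplified])
  then show ?thesis using assms by (intro inv_equality) (auto simp: gen_def class_in_carrier)
qed

lemma word_eval_gen:
  "w \<in> lists (S \<times> UNIV) \<Longrightarrow> word_eval (presented_group S R) (gen S R) w = word_class S R w"
proof (induction w)
  case Nil
  then show ?case by (simp add: one_pres)
next
  case (Cons x w)
  then obtain g b where x: "x = (g, b)" "g \<in> S" by auto
  then show ?case using Cons
    by (auto simp: gen_inv[unfolded gen_def] gen_def mult_class)
qed

lemma hom_word_eval:
  assumes "group K" "group L" "h \<in> hom K L" "f ` S \<subseteq> carrier K" "w \<in> lists (S \<times> UNIV)"
  shows "h (word_eval K f w) = word_eval L (h \<circ> f) w"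
  using assms(5)
proof (induction w)
  case Nil
  then show ?case using assms by (simp add: group_hom.hom_one group_hom.intro group_hom_axioms.intro)
next
  case (Cons x w)
  then obtain g b where x: "x = (g, b)" "g \<in> S" by auto
  interpret gh: group_hom K L h using assms by (simp add: group_hom.intro group_hom_axioms.intro)
  have c: "f g \<in> carrier K" using assms x by auto
  show ?case using Cons x c word_eval_closed[OF assms(1,4)]
    by (auto simp: gh.hom_mult gh.hom_inv)
qed


abbreviation sw :: "nat \<Rightarrow> nat \<Rightarrow> nat" where "sw i \<equiv> Transposition.transpose i (i + 1)"

lemma perm_of_word_append: "perm_of_word (u @ v) = perm_of_word u \<circ> perm_of_word v"
proof (induction u)
  case (Cons x u)
  then show ?case by (cases x) auto
qed simp

definition good :: "nat \<Rightarrow> (nat \<Rightarrow> nat) \<Rightarrow> bool" where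
  "good n \<sigma> \<longleftrightarrow> bij_betw \<sigma> {1..n} {1..n}"

lemma good_id: "good n id" by (simp add: good_def)

lemma good_comp: "good n \<sigma> \<Longrightarrow> good n \<tau> \<Longrightarrow> good n (\<sigma> \<circ> \<tau>)"
  unfolding good_def by (rule bij_betw_trans)

lemma good_sw: "1 \<le> i \<Longrightarrow> i \<le> n - 1 \<Longrightarrow> good n (sw i)"
  unfolding good_def by (rule bij_betw_transpose_iff) auto

lemma good_perm: "w \<in> lists (br_gens n \<times> UNIV) \<Longrightarrow> good n (perm_of_word w)"
proof (induction w)
  case Nil
  then show ?case using good_id by (simp add: id_def)
next
  case (Cons x w)
  then obtain i b where x: "x = (i, b)" "1 \<le> i" "i \<le> n - 1" by (auto simp: br_gens_def)
  have "good n (sw i \<circ> perm_of_word w)"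
    using Cons x by (intro good_comp good_sw) auto
  then show ?case using x by (simp add: comp_def)
qed

lemma good_in: "good n \<sigma> \<Longrightarrow> 1 \<le> i \<Longrightarrow> i \<le> n \<Longrightarrow> 1 \<le> \<sigma> i \<and> \<sigma> i \<le> n"
  unfolding good_def using bij_betw_apply by fastforce

lemma good_inj: "good n \<sigma> \<Longrightarrow> 1 \<le> i \<Longrightarrow> i \<le> n \<Longrightarrow> 1 \<le> j \<Longrightarrow> j \<le> n \<Longrightarrow> \<sigma> i = \<sigma> j \<longleftrightarrow> i = j"
  unfolding good_def using bij_betw_imp_inj_on inj_on_eq_iff
  by (metis atLeastAtMost_iff)

lemma sw_comm: "i + 2 \<le> j \<or> j + 2 \<le> i \<Longrightarrow> sw i \<circ> sw j = sw j \<circ> sw i"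
  by (rule ext) (auto simp: Transposition.transpose_def)

lemma sw_braid: "sw i \<circ> (sw (i + 1) \<circ> sw i) = sw (i + 1) \<circ> (sw i \<circ> sw (i + 1))"
  by (rule ext) (auto simp: Transposition.transpose_def)

lemma perm_pres:
  "(u, v) \<in> pres_eq (br_gens n) (br_rels n) \<Longrightarrow> perm_of_word u = perm_of_word v"
proof (induction rule: pres_eq.induct)
  case (rel u v)
  then consider (c) i j where "u = [(i, True), (j, True)]" "v = [(j, True), (i, True)]"
      "i + 2 \<le> j \<or> j + 2 \<le> i"
    | (b) i where "u = [(i, True), (i + 1, True), (i, True)]" "v = [(i + 1, True), (i, True), (i + 1, True)]"
    unfolding br_rels_def by blast
  then show ?case
  proof cases
    case c
    then show ?thesis using sw_comm[of i j] by simp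
  next
    case b
    then show ?thesis using sw_braid[of i] by simp
  qed
next
  case (cancel g b)
  then show ?case by simp
next
  case (cong u v w z)
  then show ?case by (simp add: perm_of_word_append)
qed auto

lemma Br_pres: "Br n = presented_group (br_gens n) (br_rels n)"
  by (simp add: Br_def)

lemma St_pres: "St n = presented_group (st_gens n) (st_rels n)"
  by (simp add: St_def)

lemma BrA_pres: "BrA n = presented_group (brA_gens n) (brA_rels n)"
  by (simp add: BrA_def)

lemma perm_braid_class:
  "w \<in> lists (br_gens n \<times> UNIV) \<Longrightarrow> perm_of_braid (word_class (br_gens n) (br_rels n) w) = perm_of_word w"
  unfolding perm_of_braid_def using perm_pres[OF rep_class] by simp

lemma good_braid:
  assumes "b \<in> carrier (Br n)" shows "good n (perm_of_braid b)"
proof -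
  obtain u where u: "u \<in> lists (br_gens n \<times> UNIV)" "b = word_class (br_gens n) (br_rels n) u"
    using assms unfolding Br_pres by (rule carrier_presE)
  show ?thesis using u perm_braid_class good_perm by simp
qed

lemma perm_braid_mult:
  assumes "b \<in> carrier (Br n)" "b' \<in> carrier (Br n)"
  shows "perm_of_braid (b \<otimes>\<^bsub>Br n\<^esub> b') = perm_of_braid b \<circ> perm_of_braid b'"
proof -
  obtain u where u: "u \<in> lists (br_gens n \<times> UNIV)" "b = word_class (br_gens n) (br_rels n) u"
    using assms(1) unfolding Br_pres by (rule carrier_presE)
  obtain v where v: "v \<in> lists (br_gens n \<times> UNIV)" "b' = word_class (br_gens n) (br_rels n) v"
    using assms(2) unfolding Br_pres by (rule carrier_presE)
  have "u @ v \<in> lists (br_gens n \<times> UNIV)" using u v by simp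
  then show ?thesis using u v by (simp add: Br_pres mult_class perm_braid_class perm_of_word_append)
qed

lemma perm_braid_one: "perm_of_braid (\<one>\<^bsub>Br n\<^esub>) = id"
  unfolding Br_pres one_pres by (subst perm_braid_class) auto

section \<open>The action on the Steinberg group\<close>

definition stmap :: "(nat \<Rightarrow> nat) \<Rightarrow> (nat \<times> nat \<times> 'a) word \<Rightarrow> (nat \<times> nat \<times> 'a) word" where
  "stmap \<sigma> = map (\<lambda>((i, j, a), b). ((\<sigma> i, \<sigma> j, a), b))"

lemma stmap_simps [simp]:
  "stmap \<sigma> [] = []"
  "stmap \<sigma> (((i, j, a), b) # w) = ((\<sigma> i, \<sigma> j, a), b) # stmap \<sigma> w"
  "stmap \<sigma> (u @ v) = stmap \<sigma> u @ stmap \<sigma> v"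
  by (auto simp: stmap_def)

lemma stmap_comp: "stmap \<sigma> (stmap \<tau> w) = stmap (\<sigma> \<circ> \<tau>) w"
  by (induction w) (auto simp: stmap_def)

lemma stmap_id: "stmap id w = w"
  by (induction w) (auto simp: stmap_def)

lemma st_gens_good:
  "good n \<sigma> \<Longrightarrow> (i, j, a) \<in> st_gens n \<Longrightarrow> (\<sigma> i, \<sigma> j, a) \<in> st_gens n"
  unfolding st_gens_def using good_in good_inj by auto

lemma stmap_lists:
  "good n \<sigma> \<Longrightarrow> w \<in> lists (st_gens n \<times> UNIV) \<Longrightarrow> stmap \<sigma> w \<in> lists (st_gens n \<times> UNIV)"
  by (induction w) (auto simp: stmap_def st_gens_good)

lemma stmap_pres:
  assumes "good n \<sigma>"
  shows "(u, v) \<in> pres_eq (st_gens n) (st_rels n) \<Longrightarrow>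
    (stmap \<sigma> u, stmap \<sigma> v) \<in> pres_eq (st_gens n) (st_rels n)"
proof (induction rule: pres_eq.induct)
  case (refl w)
  then show ?case using stmap_lists[OF assms] by (auto intro: pres_eq.refl)
next
  case (sym u v)
  then show ?case by (auto intro: pres_eq.sym)
next
  case (trans u v w)
  then show ?case by (auto intro: pres_eq.trans)
next
  case (rel u v)
  have ne: "\<And>i j. i \<in> {1..n} \<Longrightarrow> j \<in> {1..n} \<Longrightarrow> \<sigma> i \<noteq> \<sigma> j \<longleftrightarrow> i \<noteq> j"
    using good_inj[OF assms] by auto
  have gi: "\<And>i j. (i, j, a) \<in> st_gens n \<Longrightarrow> i \<in> {1..n} \<and> j \<in> {1..n}" for a :: 'a
    by (auto simp: st_gens_def)
  from rel(1) consider
      (a) i j a b where "u = [((i, j, a), True), ((i, j, b), True)]" "v = [((i, j, a + b), True)]"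
        "(i, j, a) \<in> st_gens n"
    | (c) i j k l a b where "u = [((i, j, a), True), ((k, l, b), True)]"
        "v = [((k, l, b), True), ((i, j, a), True)]"
        "(i, j, a) \<in> st_gens n" "(k, l, b) \<in> st_gens n" "i \<noteq> l" "j \<noteq> k"
    | (m) i j k a b where "u = [((i, j, a), True), ((j, k, b), True)]"
        "v = [((j, k, b), True), ((i, k, a * b), True), ((i, j, a), True)]"
        "(i, j, a) \<in> st_gens n" "(j, k, b) \<in> st_gens n" "i \<noteq> k"
    unfolding st_rels_def by blast
  then have "(stmap \<sigma> u, stmap \<sigma> v) \<in> st_rels n"
  proof cases
    case a
    then show ?thesis using st_gens_good[OF assms a(3)] unfolding st_rels_def by auto
  next
    case c
    have "\<sigma> i \<noteq> \<sigma> l" "\<sigma> j \<noteq> \<sigma> k" using c ne gi by blast+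
    then show ?thesis using c st_gens_good[OF assms c(3)] st_gens_good[OF assms c(4)]
      unfolding st_rels_def by auto
  next
    case m
    have "\<sigma> i \<noteq> \<sigma> k" using m ne gi by blast
    then show ?thesis using m st_gens_good[OF assms m(3)] st_gens_good[OF assms m(4)]
      unfolding st_rels_def by auto
  qed
  then show ?case using rel stmap_lists[OF assms] by (auto intro: pres_eq.rel)
next
  case (cancel g b)
  obtain i j a where g: "g = (i, j, a)" by (cases g) auto
  show ?case using pres_eq.cancel[of "(\<sigma> i, \<sigma> j, a)" "st_gens n" b "st_rels n"]
      st_gens_good[OF assms, of i j a] cancel g by simp
next
  case (cong u v w z)
  then show ?case using stmap_lists[OF assms] by (auto intro: pres_eq.cong)
qed

abbreviation stc :: "nat \<Rightarrow> (nat \<times> nat \<times> 'a::ring) word \<Rightarrow> (nat \<times> nat \<times> 'a) word set" where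
  "stc n \<equiv> word_class (st_gens n) (st_rels n)"

abbreviation brc :: "nat \<Rightarrow> nat word \<Rightarrow> nat word set" where
  "brc n \<equiv> word_class (br_gens n) (br_rels n)"

lemma st_act_class:
  assumes "good n \<sigma>" "w \<in> lists (st_gens n \<times> UNIV)"
  shows "st_act n \<sigma> (stc n w) = stc n (stmap \<sigma> w)"
  unfolding st_act_def stmap_def[symmetric]
  by (rule word_class_eqI, rule pres_eq.sym, rule stmap_pres[OF assms(1) rep_class[OF assms(2)]])

lemma St_carrierE:
  assumes "X \<in> carrier (St n)"
  obtains w where "w \<in> lists (st_gens n \<times> UNIV)" "X = stc n w"
  using assms unfolding St_pres by (rule carrier_presE)

lemma Br_carrierE:
  assumes "X \<in> carrier (Br n)"
  obtains w where "w \<in> lists (br_gens n \<times> UNIV)" "X = brc n w"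
  using assms unfolding Br_pres by (rule carrier_presE)

lemma st_act_carrier:
  assumes "good n \<sigma>" "X \<in> carrier (St n)"
  shows "st_act n \<sigma> X \<in> carrier (St n)"
proof -
  obtain w where w: "w \<in> lists (st_gens n \<times> UNIV)" "X = stc n w" using assms(2) by (rule St_carrierE)
  show ?thesis using w st_act_class[OF assms(1) w(1)] stmap_lists[OF assms(1) w(1)]
    by (simp add: St_pres class_in_carrier)
qed

lemma st_act_mult:
  assumes "good n \<sigma>" "X \<in> carrier (St n)" "Y \<in> carrier (St n)"
  shows "st_act n \<sigma> (X \<otimes>\<^bsub>St n\<^esub> Y) = st_act n \<sigma> X \<otimes>\<^bsub>St n\<^esub> st_act n \<sigma> Y"
proof -
  obtain u where u: "u \<in> lists (st_gens n \<times> UNIV)" "X = stc n u" using assms(2) by (rule St_carrierE)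
  obtain v where v: "v \<in> lists (st_gens n \<times> UNIV)" "Y = stc n v" using assms(3) by (rule St_carrierE)
  have uv: "u @ v \<in> lists (st_gens n \<times> UNIV)" using u v by simp
  have "stmap \<sigma> u \<in> lists (st_gens n \<times> UNIV)" "stmap \<sigma> v \<in> lists (st_gens n \<times> UNIV)"
    using u v stmap_lists[OF assms(1)] by auto
  then show ?thesis using u v uv
    by (simp add: St_pres mult_class st_act_class[OF assms(1)])
qed

lemma st_act_hom: "good n \<sigma> \<Longrightarrow> st_act n \<sigma> \<in> hom (St n) (St n)"
  by (rule homI) (auto simp: st_act_carrier st_act_mult)

lemma st_act_comp:
  assumes "good n \<sigma>" "good n \<tau>" "X \<in> carrier (St n)"
  shows "st_act n \<sigma> (st_act n \<tau> X) = st_act n (\<sigma> \<circ> \<tau>) X"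
proof -
  obtain u where u: "u \<in> lists (st_gens n \<times> UNIV)" "X = stc n u" using assms(3) by (rule St_carrierE)
  show ?thesis using u stmap_lists[OF assms(2) u(1)] good_comp[OF assms(1,2)]
    by (simp add: st_act_class[OF assms(2)] st_act_class[OF assms(1)] st_act_class stmap_comp)
qed

lemma st_act_id:
  assumes "X \<in> carrier (St n)" shows "st_act n id X = X"
proof -
  obtain u where u: "u \<in> lists (st_gens n \<times> UNIV)" "X = stc n u" using assms by (rule St_carrierE)
  show ?thesis using u good_id by (simp add: st_act_class stmap_id)
qed

lemma st_act_one: "good n \<sigma> \<Longrightarrow> st_act n \<sigma> \<one>\<^bsub>St n\<^esub> = \<one>\<^bsub>St n\<^esub>"
  unfolding St_pres one_pres by (subst st_act_class) auto

lemma st_act_gen: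
  "good n \<sigma> \<Longrightarrow> (i, j, a) \<in> st_gens n \<Longrightarrow>
   st_act n \<sigma> (stc n [((i, j, a), True)]) = stc n [((\<sigma> i, \<sigma> j, a), True)]"
  by (subst st_act_class) auto

lemma StBr_mult:
  "(s, b) \<otimes>\<^bsub>StBr n\<^esub> (s', b') = (s \<otimes>\<^bsub>St n\<^esub> st_act n (perm_of_braid b) s', b \<otimes>\<^bsub>Br n\<^esub> b')"
  by (simp add: StBr_def)

lemma StBr_one: "\<one>\<^bsub>StBr n\<^esub> = (\<one>\<^bsub>St n\<^esub>, \<one>\<^bsub>Br n\<^esub>)"
  by (simp add: StBr_def)

lemma StBr_carrier: "carrier (StBr n) = carrier (St n) \<times> carrier (Br n)"
  by (simp add: StBr_def)

lemma group_St: "group (St n)" unfolding St_pres by (rule group_pres)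
lemma group_Br: "group (Br n)" unfolding Br_pres by (rule group_pres)
lemma group_BrA: "group (BrA n)" unfolding BrA_pres by (rule group_pres)

lemma group_StBr: "group (StBr n :: ((nat \<times> nat \<times> 'a::ring) word set \<times> nat word set) monoid)"
proof -
  interpret S: group "St n :: (nat \<times> nat \<times> 'a) word set monoid" by (rule group_St)
  interpret B: group "Br n" by (rule group_Br)
  define H where "H = (StBr n :: ((nat \<times> nat \<times> 'a) word set \<times> nat word set) monoid)"
  show ?thesis unfolding H_def[symmetric]
  proof (rule groupI)
    fix x y assume "x \<in> carrier H" "y \<in> carrier H"
    then show "x \<otimes>\<^bsub>H\<^esub> y \<in> carrier H"
      by (auto simp: H_def StBr_carrier StBr_mult st_act_carrier good_braid)
  next
    show "\<one>\<^bsub>H\<^esub> \<in> carrier H" by (simp add: H_def StBr_one StBr_carrier)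
  next
    fix x y z assume "x \<in> carrier H" "y \<in> carrier H" "z \<in> carrier H"
    then show "x \<otimes>\<^bsub>H\<^esub> y \<otimes>\<^bsub>H\<^esub> z = x \<otimes>\<^bsub>H\<^esub> (y \<otimes>\<^bsub>H\<^esub> z)"
      by (auto simp: H_def StBr_carrier StBr_mult st_act_carrier good_braid st_act_mult
          st_act_comp perm_braid_mult S.m_assoc B.m_assoc good_comp)
  next
    fix x assume "x \<in> carrier H"
    then show "\<one>\<^bsub>H\<^esub> \<otimes>\<^bsub>H\<^esub> x = x"
      by (auto simp: H_def StBr_carrier StBr_mult StBr_one perm_braid_one st_act_id)
  next
    fix x assume x: "x \<in> carrier H"
    then obtain s b where sb: "x = (s, b)" "s \<in> carrier (St n)" "b \<in> carrier (Br n)"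
      by (auto simp: H_def StBr_carrier)
    let ?y = "(st_act n (perm_of_braid (inv\<^bsub>Br n\<^esub> b)) (inv\<^bsub>St n\<^esub> s), inv\<^bsub>Br n\<^esub> b)"
    have "?y \<otimes>\<^bsub>H\<^esub> x = \<one>\<^bsub>H\<^esub>"
      using sb by (simp add: H_def StBr_mult StBr_one good_braid st_act_mult[symmetric] st_act_one)
    moreover have "?y \<in> carrier H"
      using sb by (simp add: H_def StBr_carrier good_braid st_act_carrier)
    ultimately show "\<exists>y\<in>carrier H. y \<otimes>\<^bsub>H\<^esub> x = \<one>\<^bsub>H\<^esub>" by blast
  qed
qed


section \<open>Conjugation calculus\<close>

definition (in group) cj :: "'a \<Rightarrow> 'a \<Rightarrow> 'a" where
  "cj g x = g \<otimes> x \<otimes> inv g"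

context group
begin

lemmas nrm = m_assoc[symmetric]

lemma inv_cancel1 [simp]: "g \<in> carrier G \<Longrightarrow> x \<in> carrier G \<Longrightarrow> inv g \<otimes> (g \<otimes> x) = x"
  by (simp add: nrm)
lemma inv_cancel2 [simp]: "g \<in> carrier G \<Longrightarrow> x \<in> carrier G \<Longrightarrow> g \<otimes> (inv g \<otimes> x) = x"
  by (simp add: nrm)
lemma inv_cancel3 [simp]: "g \<in> carrier G \<Longrightarrow> x \<in> carrier G \<Longrightarrow> x \<otimes> g \<otimes> inv g = x"
  by (simp add: m_assoc)
lemma inv_cancel4 [simp]: "g \<in> carrier G \<Longrightarrow> x \<in> carrier G \<Longrightarrow> x \<otimes> inv g \<otimes> g = x"
  by (simp add: m_assoc)

lemma cj_closed [simp]: "g \<in> carrier G \<Longrightarrow> x \<in> carrier G \<Longrightarrow> cj g x \<in> carrier G"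
  by (simp add: cj_def)

lemma cj_mult_l: "g \<in> carrier G \<Longrightarrow> h \<in> carrier G \<Longrightarrow> x \<in> carrier G \<Longrightarrow> cj (g \<otimes> h) x = cj g (cj h x)"
  by (simp add: cj_def inv_mult_group m_assoc)

lemma cj_mult_r: "g \<in> carrier G \<Longrightarrow> x \<in> carrier G \<Longrightarrow> z \<in> carrier G \<Longrightarrow> cj g (x \<otimes> z) = cj g x \<otimes> cj g z"
  by (simp add: cj_def m_assoc)

lemma cj_eq_iff: "g \<in> carrier G \<Longrightarrow> x \<in> carrier G \<Longrightarrow> z \<in> carrier G \<Longrightarrow> cj g x = z \<longleftrightarrow> g \<otimes> x = z \<otimes> g"
proof -
  assume a: "g \<in> carrier G" "x \<in> carrier G" "z \<in> carrier G"
  have e: "cj g x \<otimes> g = g \<otimes> x" using a by (simp add: cj_def m_assoc)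
  have "cj g x = z \<longleftrightarrow> cj g x \<otimes> g = z \<otimes> g" using a by (intro right_cancel[symmetric]) auto
  then show ?thesis using e by simp
qed

lemma cj_inv_l [simp]: "g \<in> carrier G \<Longrightarrow> x \<in> carrier G \<Longrightarrow> cj (inv g) (cj g x) = x"
  by (simp add: cj_def m_assoc)

lemma cj_inv_r [simp]: "g \<in> carrier G \<Longrightarrow> x \<in> carrier G \<Longrightarrow> cj g (cj (inv g) x) = x"
  by (simp add: cj_def m_assoc)

lemma cj_one_l [simp]: "x \<in> carrier G \<Longrightarrow> cj \<one> x = x"
  by (simp add: cj_def)

lemma cj_one_r [simp]: "g \<in> carrier G \<Longrightarrow> cj g \<one> = \<one>"
  by (simp add: cj_def)

lemma cj_inv_eq: "g \<in> carrier G \<Longrightarrow> x \<in> carrier G \<Longrightarrow> cj g x = z \<Longrightarrow> cj (inv g) z = x"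
  by auto

lemma cj_swap: "g \<in> carrier G \<Longrightarrow> h \<in> carrier G \<Longrightarrow> x \<in> carrier G \<Longrightarrow> g \<otimes> h = h \<otimes> g \<Longrightarrow>
   cj g (cj h x) = cj h (cj g x)"
  by (simp add: cj_mult_l[symmetric])

lemma cj_inv_elt: "g \<in> carrier G \<Longrightarrow> x \<in> carrier G \<Longrightarrow> cj g (inv x) = inv (cj g x)"
  by (simp add: cj_def inv_mult_group m_assoc)

end

section \<open>The relations of the parametrized braid group, abstractly\<close>

locale brA_grp = group G for G :: "('g, 'm) monoid_scheme" (structure) +
  fixes n :: nat and y :: "nat \<Rightarrow> 'a::ring \<Rightarrow> 'g"
  assumes y_closed: "\<lbrakk>1 \<le> i; i \<le> n - 1\<rbrakk> \<Longrightarrow> y i a \<in> carrier G"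
  and A1: "\<lbrakk>1 \<le> i; i \<le> n - 1\<rbrakk> \<Longrightarrow> y i a \<otimes> y i 0 \<otimes> y i b = y i 0 \<otimes> y i 0 \<otimes> y i (a + b)"
  and A11: "\<lbrakk>1 \<le> i; i \<le> n - 1; 1 \<le> j; j \<le> n - 1; i + 2 \<le> j \<or> j + 2 \<le> i\<rbrakk> \<Longrightarrow>
      y i a \<otimes> y j b = y j b \<otimes> y i a"
  and A2: "\<lbrakk>1 \<le> i; i + 1 \<le> n - 1\<rbrakk> \<Longrightarrow>
      y i a \<otimes> y (i + 1) b \<otimes> y i c = y (i + 1) c \<otimes> y i (b + a * c) \<otimes> y (i + 1) a"
begin

definition t :: "nat \<Rightarrow> 'g" where "t i = y i 0"
definition X :: "nat \<Rightarrow> 'a \<Rightarrow> 'g" where "X i a = y i a \<otimes> inv (t i)"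
definition Z :: "nat \<Rightarrow> 'a \<Rightarrow> 'g" where "Z i a = cj (t i) (X i a)"

lemma t_closed [simp]: "1 \<le> i \<Longrightarrow> i \<le> n - 1 \<Longrightarrow> t i \<in> carrier G"
  by (simp add: t_def y_closed)

lemma X_closed [simp]: "1 \<le> i \<Longrightarrow> i \<le> n - 1 \<Longrightarrow> X i a \<in> carrier G"
  by (simp add: X_def y_closed)

lemma Z_closed [simp]: "1 \<le> i \<Longrightarrow> i \<le> n - 1 \<Longrightarrow> Z i a \<in> carrier G"
  by (simp add: Z_def)

lemma X_zero [simp]: "1 \<le> i \<Longrightarrow> i \<le> n - 1 \<Longrightarrow> X i 0 = \<one>"
  by (simp add: X_def t_def y_closed)

lemma y_X: "1 \<le> i \<Longrightarrow> i \<le> n - 1 \<Longrightarrow> y i a = X i a \<otimes> t i"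
  by (simp add: X_def m_assoc y_closed)

lemma D1: assumes "1 \<le> i" "i \<le> n - 1"
  shows "X i a \<otimes> t i \<otimes> t i = t i \<otimes> t i \<otimes> X i a"
proof -
  have "y i a \<otimes> y i 0 \<otimes> y i 0 = y i 0 \<otimes> y i 0 \<otimes> y i a" using A1[OF assms, of a 0] by simp
  then show ?thesis using assms by (simp add: y_X nrm)
qed

lemma F1: assumes "1 \<le> i" "i \<le> n - 1"
  shows "cj (t i) (cj (t i) (X i a)) = X i a"
  using assms D1[OF assms] by (simp add: cj_mult_l[symmetric] cj_eq_iff nrm)

lemma F2: assumes "1 \<le> i" "i \<le> n - 1"
  shows "X i a \<otimes> X i b = X i (a + b)"
proof -
  have "X i a \<otimes> t i \<otimes> t i \<otimes> X i b = t i \<otimes> t i \<otimes> X i (a + b)"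
    using A1[OF assms, of a b] assms by (simp add: y_X nrm)
  then have "t i \<otimes> t i \<otimes> X i a \<otimes> X i b = t i \<otimes> t i \<otimes> X i (a + b)"
    using D1[OF assms] by simp
  then have "(t i \<otimes> t i) \<otimes> (X i a \<otimes> X i b) = (t i \<otimes> t i) \<otimes> X i (a + b)"
    using assms by (simp add: nrm)
  then show ?thesis using assms by simp
qed

lemma D3t: assumes "1 \<le> i" "i \<le> n - 1" "1 \<le> j" "j \<le> n - 1" "i + 2 \<le> j \<or> j + 2 \<le> i"
  shows "t i \<otimes> t j = t j \<otimes> t i"
  using A11[OF assms, of 0 0] by (simp add: t_def)

lemma D3X: assumes "1 \<le> i" "i \<le> n - 1" "1 \<le> j" "j \<le> n - 1" "i + 2 \<le> j \<or> j + 2 \<le> i"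
  shows "X i a \<otimes> t j = t j \<otimes> X i a"
proof -
  have "X i a \<otimes> t i \<otimes> t j = t j \<otimes> X i a \<otimes> t i"
    using A11[OF assms, of a 0] assms by (simp add: y_X nrm)
  then have "X i a \<otimes> t j \<otimes> t i = t j \<otimes> X i a \<otimes> t i"
    using D3t[OF assms] assms by (simp add: m_assoc)
  then show ?thesis using assms by simp
qed

lemma F3: assumes "1 \<le> i" "i \<le> n - 1" "1 \<le> j" "j \<le> n - 1" "i + 2 \<le> j \<or> j + 2 \<le> i"
  shows "cj (t j) (X i a) = X i a"
  using assms D3X[OF assms] by (simp add: cj_eq_iff)

lemma D3XX: assumes "1 \<le> i" "i \<le> n - 1" "1 \<le> j" "j \<le> n - 1" "i + 2 \<le> j \<or> j + 2 \<le> i"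
  shows "X i a \<otimes> X j b = X j b \<otimes> X i a"
proof -
  have ji: "j + 2 \<le> i \<or> i + 2 \<le> j" using assms by auto
  have "X i a \<otimes> t i \<otimes> X j b \<otimes> t j = X j b \<otimes> t j \<otimes> X i a \<otimes> t i"
    using A11[OF assms, of a b] assms by (simp add: y_X nrm)
  then have "X i a \<otimes> (t i \<otimes> X j b) \<otimes> t j = X j b \<otimes> (t j \<otimes> X i a) \<otimes> t i"
    using assms by (simp add: m_assoc)
  then have "X i a \<otimes> (X j b \<otimes> t i) \<otimes> t j = X j b \<otimes> (X i a \<otimes> t j) \<otimes> t i"
    using D3X[OF assms, of a] D3X[OF assms(3,4,1,2) ji, of b] by simp
  then have "X i a \<otimes> X j b \<otimes> (t i \<otimes> t j) = X j b \<otimes> X i a \<otimes> (t j \<otimes> t i)"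
    using assms by (simp add: m_assoc)
  then show ?thesis using assms D3t[OF assms] by simp
qed

lemma F4: assumes "1 \<le> i" "i + 1 \<le> n - 1"
  shows "t i \<otimes> t (i + 1) \<otimes> t i = t (i + 1) \<otimes> t i \<otimes> t (i + 1)"
  using A2[OF assms, of 0 0 0] by (simp add: t_def)

lemma F5: assumes "1 \<le> i" "i + 1 \<le> n - 1"
  shows "cj (t i) (cj (t (i + 1)) (X i c)) = X (i + 1) c"
proof -
  have "t i \<otimes> t (i + 1) \<otimes> X i c \<otimes> t i = X (i + 1) c \<otimes> t (i + 1) \<otimes> t i \<otimes> t (i + 1)"
    using A2[OF assms, of 0 0 c] assms by (simp add: y_X nrm)
  also have "\<dots> = X (i + 1) c \<otimes> (t i \<otimes> t (i + 1) \<otimes> t i)"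
    using F4[OF assms] assms by (simp add: m_assoc)
  finally have "t i \<otimes> t (i + 1) \<otimes> X i c = X (i + 1) c \<otimes> t i \<otimes> t (i + 1)"
    using assms by (simp add: nrm)
  then show ?thesis using assms by (simp add: cj_mult_l[symmetric] cj_eq_iff nrm)
qed

lemma F6: assumes "1 \<le> i" "i + 1 \<le> n - 1"
  shows "cj (t (i + 1)) (cj (t i) (X (i + 1) a)) = X i a"
proof -
  have "X i a \<otimes> t i \<otimes> t (i + 1) \<otimes> t i = t (i + 1) \<otimes> t i \<otimes> X (i + 1) a \<otimes> t (i + 1)"
    using A2[OF assms, of a 0 0] assms by (simp add: y_X nrm)
  moreover have "X i a \<otimes> t i \<otimes> t (i + 1) \<otimes> t i = X i a \<otimes> t (i + 1) \<otimes> t i \<otimes> t (i + 1)"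
    using F4[OF assms] assms by (simp add: m_assoc)
  ultimately have "t (i + 1) \<otimes> t i \<otimes> X (i + 1) a = X i a \<otimes> t (i + 1) \<otimes> t i"
    using assms by simp
  then show ?thesis using assms by (simp add: cj_mult_l[symmetric] cj_eq_iff nrm)
qed

lemma F7: assumes "1 \<le> i" "i + 1 \<le> n - 1"
  shows "cj (t i) (X (i + 1) b) = cj (t (i + 1)) (X i b)"
proof -
  have "t i \<otimes> X (i + 1) b \<otimes> t (i + 1) \<otimes> t i = t (i + 1) \<otimes> X i b \<otimes> t i \<otimes> t (i + 1)"
    using A2[OF assms, of 0 b 0] assms by (simp add: y_X nrm)
  then have "cj (t i) (X (i + 1) b) \<otimes> (t i \<otimes> t (i + 1) \<otimes> t i) =
      cj (t (i + 1)) (X i b) \<otimes> (t (i + 1) \<otimes> t i \<otimes> t (i + 1))"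
    using assms by (simp add: cj_def nrm)
  then show ?thesis using assms F4[OF assms] by simp
qed

lemma F8: assumes "1 \<le> i" "i + 1 \<le> n - 1"
  shows "X i a \<otimes> cj (t (i + 1)) (X i b) \<otimes> X (i + 1) c =
    X (i + 1) c \<otimes> cj (t (i + 1)) (X i (b + a * c)) \<otimes> X i a"
proof -
  have c: "t i \<in> carrier G" "t (i + 1) \<in> carrier G" using assms by auto
  have "X i a \<otimes> t i \<otimes> X (i + 1) b \<otimes> t (i + 1) \<otimes> X i c \<otimes> t i =
      X (i + 1) c \<otimes> t (i + 1) \<otimes> X i (b + a * c) \<otimes> t i \<otimes> X (i + 1) a \<otimes> t (i + 1)"
    using A2[OF assms, of a b c] assms by (simp add: y_X nrm)
  moreover have "X i a \<otimes> t i \<otimes> X (i + 1) b \<otimes> t (i + 1) \<otimes> X i c \<otimes> t i =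
      X i a \<otimes> cj (t i) (X (i + 1) b) \<otimes> cj (t i \<otimes> t (i + 1)) (X i c) \<otimes> (t i \<otimes> t (i + 1) \<otimes> t i)"
    using assms by (simp add: cj_def nrm inv_mult_group)
  moreover have "X (i + 1) c \<otimes> t (i + 1) \<otimes> X i (b + a * c) \<otimes> t i \<otimes> X (i + 1) a \<otimes> t (i + 1) =
      X (i + 1) c \<otimes> cj (t (i + 1)) (X i (b + a * c)) \<otimes> cj (t (i + 1) \<otimes> t i) (X (i + 1) a)
        \<otimes> (t (i + 1) \<otimes> t i \<otimes> t (i + 1))"
    using assms by (simp add: cj_def nrm inv_mult_group)
  ultimately have "X i a \<otimes> cj (t i) (X (i + 1) b) \<otimes> cj (t i \<otimes> t (i + 1)) (X i c) =
      X (i + 1) c \<otimes> cj (t (i + 1)) (X i (b + a * c)) \<otimes> cj (t (i + 1) \<otimes> t i) (X (i + 1) a)"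
    using F4[OF assms] assms by simp
  then show ?thesis using assms F5[OF assms, of c] F6[OF assms, of a] F7[OF assms, of b]
    by (simp add: cj_mult_l)
qed

end


context brA_grp
begin

lemma BR1: assumes "1 \<le> m" "m + 1 \<le> n - 1" "x \<in> carrier G"
  shows "cj (t m) (cj (t (m + 1)) (cj (t m) x)) = cj (t (m + 1)) (cj (t m) (cj (t (m + 1)) x))"
proof -
  have c: "t m \<in> carrier G" "t (m + 1) \<in> carrier G" using assms by auto
  have "cj (t m) (cj (t (m + 1)) (cj (t m) x)) = cj (t m \<otimes> t (m + 1) \<otimes> t m) x"
    using c assms by (simp add: cj_mult_l)
  also have "\<dots> = cj (t (m + 1) \<otimes> t m \<otimes> t (m + 1)) x" using F4[OF assms(1,2)] by simp
  also have "\<dots> = cj (t (m + 1)) (cj (t m) (cj (t (m + 1)) x))"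
    using c assms by (simp add: cj_mult_l)
  finally show ?thesis .
qed

lemma BR2: assumes "1 \<le> m" "m + 1 \<le> n - 1" "x \<in> carrier G"
  shows "cj (t (m + 1)) (cj (t (m + 1)) (cj (t m) x)) =
    cj (t m) (cj (t (m + 1)) (cj (t m) (cj (t m) (cj (inv (t (m + 1))) x))))"
proof -
  have c: "t m \<in> carrier G" "t (m + 1) \<in> carrier G" using assms by auto
  have "t (m + 1) \<otimes> t (m + 1) \<otimes> t m \<otimes> t (m + 1) = t (m + 1) \<otimes> (t (m + 1) \<otimes> t m \<otimes> t (m + 1))"
    using c by (simp add: m_assoc)
  also have "\<dots> = t (m + 1) \<otimes> (t m \<otimes> t (m + 1) \<otimes> t m)" using F4[OF assms(1,2)] by simp
  also have "\<dots> = (t (m + 1) \<otimes> t m \<otimes> t (m + 1)) \<otimes> t m" using c by (simp add: m_assoc)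
  also have "\<dots> = (t m \<otimes> t (m + 1) \<otimes> t m) \<otimes> t m" using F4[OF assms(1,2)] by simp
  finally have e: "t (m + 1) \<otimes> t (m + 1) \<otimes> t m \<otimes> t (m + 1) = t m \<otimes> t (m + 1) \<otimes> t m \<otimes> t m" .
  have e2: "t (m + 1) \<otimes> t (m + 1) \<otimes> t m = t m \<otimes> t (m + 1) \<otimes> t m \<otimes> t m \<otimes> inv (t (m + 1))"
  proof -
    have "t (m + 1) \<otimes> t (m + 1) \<otimes> t m = t (m + 1) \<otimes> t (m + 1) \<otimes> t m \<otimes> t (m + 1) \<otimes> inv (t (m + 1))"
      using c by simp
    also have "\<dots> = t m \<otimes> t (m + 1) \<otimes> t m \<otimes> t m \<otimes> inv (t (m + 1))" using e by simp
    finally show ?thesis .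
  qed
  have "cj (t (m + 1)) (cj (t (m + 1)) (cj (t m) x)) = cj (t (m + 1) \<otimes> t (m + 1) \<otimes> t m) x"
    using c assms by (simp add: cj_mult_l)
  also have "\<dots> = cj (t m \<otimes> t (m + 1) \<otimes> t m \<otimes> t m \<otimes> inv (t (m + 1))) x" using e2 by simp
  also have "\<dots> = cj (t m) (cj (t (m + 1)) (cj (t m) (cj (t m) (cj (inv (t (m + 1))) x))))"
    using c assms by (simp add: cj_mult_l)
  finally show ?thesis .
qed

lemma cj_fix_inv: "g \<in> carrier G \<Longrightarrow> x \<in> carrier G \<Longrightarrow> cj g x = x \<Longrightarrow> cj (inv g) x = x"
  by (metis cj_inv_l)

lemma t_swap: assumes "1 \<le> i" "i \<le> n - 1" "1 \<le> j" "j \<le> n - 1" "i + 2 \<le> j \<or> j + 2 \<le> i"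
    "x \<in> carrier G"
  shows "cj (t i) (cj (t j) x) = cj (t j) (cj (t i) x)"
  using assms by (intro cj_swap D3t) auto

definition base :: "(nat \<Rightarrow> 'g) \<Rightarrow> bool" where
  "base B \<longleftrightarrow> (\<forall>i. 1 \<le> i \<longrightarrow> i \<le> n - 1 \<longrightarrow> B i \<in> carrier G) \<and>
   (\<forall>i k. 1 \<le> i \<longrightarrow> i \<le> n - 1 \<longrightarrow> 1 \<le> k \<longrightarrow> k \<le> n - 1 \<longrightarrow> (k + 2 \<le> i \<or> i + 2 \<le> k) \<longrightarrow>
      cj (t k) (B i) = B i) \<and>
   (\<forall>i. 1 \<le> i \<longrightarrow> i + 1 \<le> n - 1 \<longrightarrow> cj (t (i + 1)) (cj (t (i + 1)) (B i)) = B i) \<and>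
   (\<forall>i. 1 \<le> i \<longrightarrow> i + 1 \<le> n - 1 \<longrightarrow> cj (t i) (cj (t (i + 1)) (B i)) = B (i + 1)) \<and>
   (\<forall>i. 1 \<le> i \<longrightarrow> i + 1 \<le> n - 1 \<longrightarrow> cj (t i) (B (i + 1)) = cj (t (i + 1)) (B i))"

lemma base0: "base B \<Longrightarrow> 1 \<le> i \<Longrightarrow> i \<le> n - 1 \<Longrightarrow> B i \<in> carrier G"
  unfolding base_def by blast
lemma base1: "base B \<Longrightarrow> 1 \<le> i \<Longrightarrow> i \<le> n - 1 \<Longrightarrow> 1 \<le> k \<Longrightarrow> k \<le> n - 1 \<Longrightarrow> k + 2 \<le> i \<or> i + 2 \<le> k \<Longrightarrow>
    cj (t k) (B i) = B i"
  unfolding base_def by blast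
lemma base2: "base B \<Longrightarrow> 1 \<le> i \<Longrightarrow> i + 1 \<le> n - 1 \<Longrightarrow> cj (t (i + 1)) (cj (t (i + 1)) (B i)) = B i"
  unfolding base_def by blast
lemma base3: "base B \<Longrightarrow> 1 \<le> i \<Longrightarrow> i + 1 \<le> n - 1 \<Longrightarrow> cj (t i) (cj (t (i + 1)) (B i)) = B (i + 1)"
  unfolding base_def by blast
lemma base4: "base B \<Longrightarrow> 1 \<le> i \<Longrightarrow> i + 1 \<le> n - 1 \<Longrightarrow> cj (t i) (B (i + 1)) = cj (t (i + 1)) (B i)"
  unfolding base_def by blast

primrec V :: "(nat \<Rightarrow> 'g) \<Rightarrow> nat \<Rightarrow> nat \<Rightarrow> 'g" where
  "V B i 0 = B i"
| "V B i (Suc d) = cj (t (i + d + 1)) (V B i d)"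

lemma V_closed: "base B \<Longrightarrow> 1 \<le> i \<Longrightarrow> i + d + 1 \<le> n \<Longrightarrow> V B i d \<in> carrier G"
  by (induction d) (auto simp: base0)

lemma Va: assumes "base B" "1 \<le> i" "i + d + 1 \<le> n" "i + d + 2 \<le> k" "k \<le> n - 1"
  shows "cj (t k) (V B i d) = V B i d"
  using assms(3,4)
proof (induction d)
  case 0
  then show ?case using assms by (simp add: base1)
next
  case (Suc d)
  have "cj (t k) (cj (t (i + d + 1)) (V B i d)) = cj (t (i + d + 1)) (cj (t k) (V B i d))"
    using Suc assms by (intro t_swap V_closed) auto
  also have "\<dots> = cj (t (i + d + 1)) (V B i d)" using Suc assms by simp
  finally show ?case by simp
qed

lemma Vg: assumes "base B" "1 \<le> k" "k + 2 \<le> i" "i + d + 1 \<le> n"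
  shows "cj (t k) (V B i d) = V B i d"
  using assms(4)
proof (induction d)
  case 0
  then show ?case using assms by (simp add: base1)
next
  case (Suc d)
  have "cj (t k) (cj (t (i + d + 1)) (V B i d)) = cj (t (i + d + 1)) (cj (t k) (V B i d))"
    using Suc assms by (intro t_swap V_closed) auto
  also have "\<dots> = cj (t (i + d + 1)) (V B i d)" using Suc assms by simp
  finally show ?case by simp
qed

lemma Vsq: assumes "base B" "1 \<le> i" "i + d + 1 \<le> n - 1"
  shows "cj (t (i + d + 1)) (cj (t (i + d + 1)) (V B i d)) = V B i d"
  using assms(3)
proof (induction d)
  case 0
  then show ?case using assms base2[OF assms(1,2)] by simp
next
  case (Suc d)
  let ?m = "i + d + 1"
  have Vc: "V B i d \<in> carrier G" using Suc assms by (intro V_closed) auto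
  have fix1: "cj (t (?m + 1)) (V B i d) = V B i d" using Suc assms by (intro Va) auto
  have fix2: "cj (inv (t (?m + 1))) (V B i d) = V B i d"
    using fix1 Suc assms Vc by (intro cj_fix_inv) auto
  have "cj (t (?m + 1)) (cj (t (?m + 1)) (cj (t ?m) (V B i d))) =
    cj (t ?m) (cj (t (?m + 1)) (cj (t ?m) (cj (t ?m) (cj (inv (t (?m + 1))) (V B i d)))))"
    using Suc assms Vc by (intro BR2) auto
  also have "\<dots> = cj (t ?m) (cj (t (?m + 1)) (cj (t ?m) (cj (t ?m) (V B i d))))" using fix2 by simp
  also have "\<dots> = cj (t ?m) (cj (t (?m + 1)) (V B i d))" using Suc by simp
  also have "\<dots> = cj (t ?m) (V B i d)" using fix1 by simp
  finally show ?case by (simp add: add.commute add.left_commute)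
qed

lemma Vc: assumes "base B" "1 \<le> i" "i + d + 2 \<le> n"
  shows "cj (t (i + d + 1)) (V B i (Suc d)) = V B i d"
  using Vsq[OF assms(1,2), of d] assms by simp

lemma Vd: assumes "base B" "1 \<le> i" "i + d + 1 \<le> n" "i + 1 \<le> k" "k + 2 \<le> i + d + 1"
  shows "cj (t k) (V B i d) = V B i d"
  using assms(3,5)
proof (induction d)
  case 0
  then show ?case using assms by simp
next
  case (Suc d)
  let ?m = "i + d + 1"
  have Vcar: "V B i d \<in> carrier G" using Suc assms by (intro V_closed) auto
  show ?case
  proof (cases "k + 2 \<le> ?m")
    case True
    have "cj (t k) (cj (t ?m) (V B i d)) = cj (t ?m) (cj (t k) (V B i d))"
      using Suc assms True Vcar by (intro t_swap) auto
    also have "\<dots> = cj (t ?m) (V B i d)" using Suc assms True by simp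
    finally show ?thesis by simp
  next
    case False
    then have k: "k = i + d" using Suc by simp
    then obtain d' where d: "d = Suc d'" using assms by (cases d) auto
    have Vcar': "V B i d' \<in> carrier G" using Suc assms d by (intro V_closed) auto
    have Vd: "V B i d = cj (t k) (V B i d')" using k d by simp
    have fix1: "cj (t (k + 1)) (V B i d') = V B i d'" using Suc assms d k by (intro Va) auto
    have "cj (t k) (cj (t (k + 1)) (cj (t k) (V B i d'))) =
        cj (t (k + 1)) (cj (t k) (cj (t (k + 1)) (V B i d')))"
      using Suc assms k d Vcar' by (intro BR1) auto
    also have "\<dots> = cj (t (k + 1)) (cj (t k) (V B i d'))" using fix1 by simp
    finally show ?thesis using Vd k by simp
  qed
qed

lemma Ve: assumes "base B" "1 \<le> i" "i + d + 2 \<le> n"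
  shows "cj (t i) (V B i (Suc d)) = V B (i + 1) d"
  using assms(3)
proof (induction d)
  case 0
  then show ?case using assms base3[OF assms(1,2)] by simp
next
  case (Suc d)
  let ?m = "i + d + 2"
  have Vcar: "V B i (Suc d) \<in> carrier G" using Suc assms by (intro V_closed) auto
  have "cj (t i) (cj (t ?m) (V B i (Suc d))) = cj (t ?m) (cj (t i) (V B i (Suc d)))"
    using Suc assms Vcar by (intro t_swap) auto
  also have "\<dots> = cj (t ?m) (V B (i + 1) d)" using Suc by simp
  finally show ?case by (simp add: add.commute add.left_commute)
qed

lemma Vf: assumes "base B" "1 \<le> i" "i + d + 2 \<le> n"
  shows "cj (t i) (V B (i + 1) d) = V B i (Suc d)"
  using assms(3)
proof (induction d)
  case 0
  then show ?case using assms base4[OF assms(1,2)] by simp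
next
  case (Suc d)
  let ?m = "i + d + 2"
  have Vcar: "V B (i + 1) d \<in> carrier G" using Suc assms by (intro V_closed) auto
  have "cj (t i) (cj (t ?m) (V B (i + 1) d)) = cj (t ?m) (cj (t i) (V B (i + 1) d))"
    using Suc assms Vcar by (intro t_swap) auto
  also have "\<dots> = cj (t ?m) (V B i (Suc d))" using Suc by simp
  finally show ?case by (simp add: add.commute add.left_commute)
qed

end


context brA_grp
begin

lemma F9: assumes "1 \<le> i" "i + 1 \<le> n - 1"
  shows "cj (t (i + 1)) (cj (t (i + 1)) (X i a)) = X i a"
  using F7[OF assms, of a, symmetric] F6[OF assms, of a] by simp

lemma F10: assumes "1 \<le> i" "i + 1 \<le> n - 1"
  shows "cj (t i) (cj (t i) (X (i + 1) a)) = X (i + 1) a"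
  using F7[OF assms, of a] F5[OF assms, of a] by simp

lemma base_X: "base (\<lambda>m. X m a)"
  unfolding base_def
proof (intro conjI allI impI)
  fix i k assume "1 \<le> i" "i \<le> n - 1" "1 \<le> k" "k \<le> n - 1" "k + 2 \<le> i \<or> i + 2 \<le> k"
  then show "cj (t k) (X i a) = X i a" by (intro F3) auto
next
  fix i assume "1 \<le> i" "i + 1 \<le> n - 1"
  then show "cj (t (i + 1)) (cj (t (i + 1)) (X i a)) = X i a" by (rule F9)
next
  fix i assume "1 \<le> i" "i + 1 \<le> n - 1"
  then show "cj (t i) (cj (t (i + 1)) (X i a)) = X (i + 1) a" by (rule F5)
next
  fix i assume "1 \<le> i" "i + 1 \<le> n - 1"
  then show "cj (t i) (X (i + 1) a) = cj (t (i + 1)) (X i a)" by (rule F7)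
qed auto

lemma base_Z: "base (\<lambda>m. Z m a)"
  unfolding base_def
proof (intro conjI allI impI)
  fix i k assume a: "1 \<le> i" "i \<le> n - 1" "1 \<le> k" "k \<le> n - 1" "k + 2 \<le> i \<or> i + 2 \<le> k"
  have "cj (t k) (cj (t i) (X i a)) = cj (t i) (cj (t k) (X i a))"
    using a by (intro t_swap) auto
  also have "\<dots> = cj (t i) (X i a)" using a F3[of i k a] by auto
  finally show "cj (t k) (Z i a) = Z i a" by (simp add: Z_def)
next
  fix i assume a: "1 \<le> i" "i + 1 \<le> n - 1"
  have c: "t i \<in> carrier G" "t (i + 1) \<in> carrier G" "X i a \<in> carrier G" "X (i + 1) a \<in> carrier G"
    using a by auto
  have e1: "cj (inv (t (i + 1))) (X i a) = cj (t i) (X (i + 1) a)"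
  proof -
    have "cj (inv (t (i + 1))) (X i a) = cj (inv (t (i + 1))) (cj (t (i + 1)) (cj (t (i + 1)) (X i a)))"
      using F9[OF a, of a] by simp
    also have "\<dots> = cj (t (i + 1)) (X i a)" using c by simp
    finally show ?thesis using F7[OF a, of a] by simp
  qed
  have "cj (t (i + 1)) (cj (t (i + 1)) (cj (t i) (X i a))) =
    cj (t i) (cj (t (i + 1)) (cj (t i) (cj (t i) (cj (inv (t (i + 1))) (X i a)))))"
    using a c by (intro BR2) auto
  also have "\<dots> = cj (t i) (cj (t (i + 1)) (cj (t i) (cj (t i) (cj (t i) (X (i + 1) a)))))"
    using e1 by simp
  also have "\<dots> = cj (t i) (cj (t (i + 1)) (cj (t i) (X (i + 1) a)))"
    using F10[OF a, of a] by simp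
  also have "\<dots> = cj (t i) (X i a)" using F6[OF a, of a] by simp
  finally show "cj (t (i + 1)) (cj (t (i + 1)) (Z i a)) = Z i a" by (simp add: Z_def)
next
  fix i assume a: "1 \<le> i" "i + 1 \<le> n - 1"
  have c: "X i a \<in> carrier G" using a by auto
  have "cj (t i) (cj (t (i + 1)) (cj (t i) (X i a))) = cj (t (i + 1)) (cj (t i) (cj (t (i + 1)) (X i a)))"
    using a c by (intro BR1) auto
  also have "\<dots> = cj (t (i + 1)) (X (i + 1) a)" using F5[OF a, of a] by simp
  finally show "cj (t i) (cj (t (i + 1)) (Z i a)) = Z (i + 1) a" by (simp add: Z_def)
next
  fix i assume a: "1 \<le> i" "i + 1 \<le> n - 1"
  have c: "X i a \<in> carrier G" "cj (t (i + 1)) (X i a) \<in> carrier G" using a by auto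
  have "cj (t i) (cj (t (i + 1)) (X (i + 1) a)) =
      cj (t i) (cj (t (i + 1)) (cj (t i) (cj (t (i + 1)) (X i a))))"
    using F5[OF a, of a] by simp
  also have "\<dots> = cj (t (i + 1)) (cj (t i) (cj (t (i + 1)) (cj (t (i + 1)) (X i a))))"
    using a c by (intro BR1) auto
  also have "\<dots> = cj (t (i + 1)) (cj (t i) (X i a))" using F9[OF a, of a] by simp
  finally show "cj (t i) (Z (i + 1) a) = cj (t (i + 1)) (Z i a)" by (simp add: Z_def)
qed auto

lemma VL: assumes "base B" "1 \<le> lo" "lo < hi" "hi \<le> n" "1 \<le> k" "k \<le> n - 1"
    "\<not> (k = lo \<and> hi = lo + 1)"
  shows "sw k lo < sw k hi \<and> cj (t k) (V B lo (hi - lo - 1)) = V B (sw k lo) (sw k hi - sw k lo - 1)"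
proof -
  define d where "d = hi - lo - 1"
  have hi: "hi = lo + d + 1" using assms d_def by simp
  have dd: "hi - lo - 1 = d" using d_def by simp
  consider "k + 2 \<le> lo" | "k + 1 = lo" | "k = lo" "hi \<ge> lo + 2" | "lo < k" "k + 2 \<le> hi"
    | "k + 1 = hi" "k > lo" | "k = hi" | "k > hi"
    using assms by linarith
  then show ?thesis
  proof cases
    case 1
    then have s: "sw k lo = lo" "sw k hi = hi" using assms by (auto simp: Transposition.transpose_def)
    have "cj (t k) (V B lo d) = V B lo d" using 1 assms hi by (intro Vg) auto
    then show ?thesis using s dd assms by simp
  next
    case 2
    then have s: "sw k lo = k" "sw k hi = hi" using assms by (auto simp: Transposition.transpose_def)
    have "cj (t k) (V B (k + 1) d) = V B k (Suc d)" using 2 assms hi by (intro Vf) auto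
    moreover have "hi - k - 1 = Suc d" using 2 hi by simp
    ultimately show ?thesis using s dd assms 2 by simp
  next
    case 3
    then obtain d' where d': "d = Suc d'" using hi by (cases d) auto
    have s: "sw k lo = lo + 1" "sw k hi = hi" using 3 assms by (auto simp: Transposition.transpose_def)
    have "cj (t lo) (V B lo (Suc d')) = V B (lo + 1) d'" using 3 assms hi d' by (intro Ve) auto
    moreover have "hi - (lo + 1) - 1 = d'" using hi d' by simp
    ultimately show ?thesis using s dd assms 3 d' by simp
  next
    case 4
    then have s: "sw k lo = lo" "sw k hi = hi" using assms by (auto simp: Transposition.transpose_def)
    have "cj (t k) (V B lo d) = V B lo d" using 4 assms hi by (intro Vd) auto
    then show ?thesis using s dd assms by simp
  next
    case 5
    then obtain d' where d': "d = Suc d'" using hi by (cases d) auto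
    have s: "sw k lo = lo" "sw k hi = k" using 5 assms by (auto simp: Transposition.transpose_def)
    have "cj (t (lo + d' + 1)) (V B lo (Suc d')) = V B lo d'" using 5 assms hi d' by (intro Vc) auto
    moreover have "lo + d' + 1 = k" "k - lo - 1 = d'" using 5 hi d' by auto
    ultimately show ?thesis using s dd assms 5 d' by simp
  next
    case 6
    then have s: "sw k lo = lo" "sw k hi = hi + 1" using assms by (auto simp: Transposition.transpose_def)
    have "cj (t hi) (V B lo d) = V B lo (Suc d)" using hi by simp
    moreover have "hi + 1 - lo - 1 = Suc d" using hi by simp
    ultimately show ?thesis using s dd assms 6 by simp
  next
    case 7
    then have s: "sw k lo = lo" "sw k hi = hi" using assms by (auto simp: Transposition.transpose_def)
    have "cj (t k) (V B lo d) = V B lo d" using 7 assms hi by (intro Va) auto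
    then show ?thesis using s dd assms by simp
  qed
qed

definition Yf :: "'a \<Rightarrow> nat \<Rightarrow> nat \<Rightarrow> 'g" where
  "Yf a i j = (if i < j then V (\<lambda>m. X m a) i (j - i - 1) else V (\<lambda>m. Z m a) j (i - j - 1))"

lemma Yf_closed: "1 \<le> i \<Longrightarrow> i \<le> n \<Longrightarrow> 1 \<le> j \<Longrightarrow> j \<le> n \<Longrightarrow> i \<noteq> j \<Longrightarrow> Yf a i j \<in> carrier G"
  unfolding Yf_def using V_closed[OF base_X] V_closed[OF base_Z] by auto

lemma L: assumes "1 \<le> k" "k \<le> n - 1" "1 \<le> i" "i \<le> n" "1 \<le> j" "j \<le> n" "i \<noteq> j"
  shows "cj (t k) (Yf a i j) = Yf a (sw k i) (sw k j)"
proof (cases "i < j")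
  case True
  show ?thesis
  proof (cases "k = i \<and> j = i + 1")
    case True
    then show ?thesis using assms by (simp add: Yf_def Z_def)
  next
    case False
    have v: "sw k i < sw k j \<and> cj (t k) (V (\<lambda>m. X m a) i (j - i - 1)) =
        V (\<lambda>m. X m a) (sw k i) (sw k j - sw k i - 1)"
      using False assms \<open>i < j\<close> by (intro VL[OF base_X]) auto
    then show ?thesis using v \<open>i < j\<close> by (simp add: Yf_def)
  qed
next
  case False
  then have ji: "j < i" using assms by simp
  show ?thesis
  proof (cases "k = j \<and> i = j + 1")
    case True
    then show ?thesis using assms F1[of j a] by (simp add: Yf_def Z_def)
  next
    case False
    have v: "sw k j < sw k i \<and> cj (t k) (V (\<lambda>m. Z m a) j (i - j - 1)) =
        V (\<lambda>m. Z m a) (sw k j) (sw k i - sw k j - 1)"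
      using False assms ji by (intro VL[OF base_Z]) auto
    then have "\<not> sw k i < sw k j" by simp
    then show ?thesis using v ji by (simp add: Yf_def)
  qed
qed

lemma Linv: assumes "1 \<le> k" "k \<le> n - 1" "1 \<le> i" "i \<le> n" "1 \<le> j" "j \<le> n" "i \<noteq> j"
  shows "cj (inv (t k)) (Yf a i j) = Yf a (sw k i) (sw k j)"
proof -
  have g: "good n (sw k)" using assms by (intro good_sw) auto
  have r: "1 \<le> sw k i" "sw k i \<le> n" "1 \<le> sw k j" "sw k j \<le> n" "sw k i \<noteq> sw k j"
    using good_in[OF g] good_inj[OF g] assms by auto
  have e: "cj (t k) (Yf a (sw k i) (sw k j)) = Yf a i j"
    using L[OF assms(1,2) r] by simp
  have "cj (inv (t k)) (Yf a i j) = cj (inv (t k)) (cj (t k) (Yf a (sw k i) (sw k j)))"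
    using e by simp
  also have "\<dots> = Yf a (sw k i) (sw k j)" using Yf_closed[OF r] assms by simp
  finally show ?thesis .
qed

definition tw :: "nat word \<Rightarrow> 'g" where "tw w = word_eval G t w"

lemma t_image: "t ` br_gens n \<subseteq> carrier G"
  by (auto simp: br_gens_def)

lemma tw_closed: "w \<in> lists (br_gens n \<times> UNIV) \<Longrightarrow> tw w \<in> carrier G"
  unfolding tw_def by (rule word_eval_closed[OF is_group t_image])

lemma TL: assumes "w \<in> lists (br_gens n \<times> UNIV)" "1 \<le> i" "i \<le> n" "1 \<le> j" "j \<le> n" "i \<noteq> j"
  shows "cj (tw w) (Yf a i j) = Yf a (perm_of_word w i) (perm_of_word w j)"
  using assms(1)
proof (induction w)
  case Nil
  then show ?case using assms Yf_closed by (simp add: tw_def)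
next
  case (Cons x w)
  then obtain k b where x: "x = (k, b)" "1 \<le> k" "k \<le> n - 1" "w \<in> lists (br_gens n \<times> UNIV)"
    by (auto simp: br_gens_def)
  have g: "good n (perm_of_word w)" using good_perm x by blast
  have r: "1 \<le> perm_of_word w i" "perm_of_word w i \<le> n" "1 \<le> perm_of_word w j"
      "perm_of_word w j \<le> n" "perm_of_word w i \<noteq> perm_of_word w j"
    using good_in[OF g] good_inj[OF g] assms by auto
  have tc: "tw w \<in> carrier G" using tw_closed x by blast
  have tw: "tw ((k, b) # w) = (if b then t k else inv (t k)) \<otimes> tw w" by (simp add: tw_def)
  show ?case
  proof (cases b)
    case True
    then show ?thesis using x tw tc Cons.IH x(4) L[OF x(2,3) r] Yf_closed assms
      by (simp add: cj_mult_l)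
  next
    case False
    then show ?thesis using x tw tc Cons.IH x(4) Linv[OF x(2,3) r] Yf_closed assms
      by (simp add: cj_mult_l)
  qed
qed

end


section \<open>Realizing index tuples by braid words\<close>

fun shiftw :: "nat \<Rightarrow> nat \<Rightarrow> nat word" where
  "shiftw 0 k = []"
| "shiftw (Suc d) k = shiftw d (k + 1) @ [(k, True)]"

lemma shiftw_lists: "1 \<le> k \<Longrightarrow> k + d \<le> n \<Longrightarrow> shiftw d k \<in> lists (br_gens n \<times> UNIV)"
  by (induction d k rule: shiftw.induct) (auto simp: br_gens_def)

lemma shiftw_perm: "perm_of_word (shiftw d k) k = k + d \<and> (\<forall>p < k. perm_of_word (shiftw d k) p = p)"
proof (induction d k rule: shiftw.induct)
  case (1 k)
  then show ?case by simp
next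
  case (2 d k)
  then show ?case by (auto simp: perm_of_word_append Transposition.transpose_def)
qed

lemma realize:
  "distinct xs \<Longrightarrow> set xs \<subseteq> {1..n} \<Longrightarrow>
   \<exists>w \<in> lists (br_gens n \<times> UNIV). \<forall>p < length xs. perm_of_word w (p + 1) = xs ! p"
proof (induction xs rule: rev_induct)
  case Nil
  then show ?case by (intro bexI[of _ "[]"]) auto
next
  case (snoc x ys)
  then obtain w0 where w0: "w0 \<in> lists (br_gens n \<times> UNIV)"
    "\<forall>p < length ys. perm_of_word w0 (p + 1) = ys ! p" by auto
  let ?m = "length ys"
  have g: "good n (perm_of_word w0)" using good_perm[OF w0(1)] .
  have xin: "x \<in> {1..n}" using snoc by auto
  have "x \<in> perm_of_word w0 ` {1..n}" using g xin unfolding good_def bij_betw_def by simp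
  then obtain q where q: "q \<in> {1..n}" "perm_of_word w0 q = x" by auto
  have qm: "q \<ge> ?m + 1"
  proof (rule ccontr)
    assume "\<not> q \<ge> ?m + 1"
    then obtain p where p: "p < ?m" "q = p + 1" using q by (cases q) auto
    then have "x = ys ! p" using w0 q by auto
    then show False using p snoc.prems(1) by (auto simp: nth_mem)
  qed
  define v where "v = shiftw (q - (?m + 1)) (?m + 1)"
  have vl: "v \<in> lists (br_gens n \<times> UNIV)" unfolding v_def using q qm by (intro shiftw_lists) auto
  have vp: "perm_of_word v (?m + 1) = q" "\<forall>p < ?m + 1. perm_of_word v p = p"
    using shiftw_perm[of "q - (?m + 1)" "?m + 1"] qm unfolding v_def by auto
  show ?case
  proof (intro bexI[of _ "w0 @ v"] allI impI)
    fix p assume p: "p < length (ys @ [x])"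
    show "perm_of_word (w0 @ v) (p + 1) = (ys @ [x]) ! p"
    proof (cases "p < ?m")
      case True
      then show ?thesis using vp w0 by (simp add: perm_of_word_append nth_append)
    next
      case False
      then have "p = ?m" using p by simp
      then show ?thesis using vp q by (simp add: perm_of_word_append nth_append)
    qed
  qed (use w0 vl in auto)
qed

lemma card_bound: "distinct xs \<Longrightarrow> set xs \<subseteq> {1..n} \<Longrightarrow> length xs \<le> n"
  using card_mono[of "{1..n}" "set xs"] distinct_card[of xs] by auto

context brA_grp
begin

lemma transport:
  assumes "distinct xs" "set xs \<subseteq> {1..n}"
  obtains w where "w \<in> lists (br_gens n \<times> UNIV)"
    "\<And>p q a. p < length xs \<Longrightarrow> q < length xs \<Longrightarrow> p \<noteq> q \<Longrightarrow>
       Yf a (xs ! p) (xs ! q) = cj (tw w) (Yf a (Suc p) (Suc q))"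
proof -
  obtain w where w: "w \<in> lists (br_gens n \<times> UNIV)" "\<forall>p < length xs. perm_of_word w (p + 1) = xs ! p"
    using realize[OF assms] by blast
  have L: "length xs \<le> n" using card_bound[OF assms] .
  show ?thesis
  proof (rule that[OF w(1)])
    fix p q a assume pq: "p < length xs" "q < length xs" "p \<noteq> q"
    have "cj (tw w) (Yf a (p + 1) (q + 1)) = Yf a (perm_of_word w (p + 1)) (perm_of_word w (q + 1))"
      using pq L by (intro TL[OF w(1)]) auto
    then show "Yf a (xs ! p) (xs ! q) = cj (tw w) (Yf a (Suc p) (Suc q))" using w(2) pq by simp
  qed
qed

lemma Y12: "Yf a (Suc 0) (Suc (Suc 0)) = X (Suc 0) a" by (simp add: Yf_def)
lemma Y23: "Yf a (Suc (Suc 0)) (Suc (Suc (Suc 0))) = X (Suc (Suc 0)) a" by (simp add: Yf_def)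
lemma Y13: "Yf a (Suc 0) (Suc (Suc (Suc 0))) = cj (t (Suc (Suc 0))) (X (Suc 0) a)" by (simp add: Yf_def)
lemma Y34: "Yf a (Suc (Suc (Suc 0))) (Suc (Suc (Suc (Suc 0)))) = X (Suc (Suc (Suc 0))) a"
  by (simp add: Yf_def)

lemma comm_cj: "g \<in> carrier G \<Longrightarrow> x \<in> carrier G \<Longrightarrow> z \<in> carrier G \<Longrightarrow> x \<otimes> z = z \<otimes> x \<Longrightarrow>
    cj g x \<otimes> cj g z = cj g z \<otimes> cj g x"
  by (simp add: cj_mult_r[symmetric])

lemma St_rel1: assumes "1 \<le> i" "i \<le> n" "1 \<le> j" "j \<le> n" "i \<noteq> j"
  shows "Yf a i j \<otimes> Yf b i j = Yf (a + b) i j"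
proof -
  obtain w where w: "w \<in> lists (br_gens n \<times> UNIV)"
    "\<And>p q a. p < length [i, j] \<Longrightarrow> q < length [i, j] \<Longrightarrow> p \<noteq> q \<Longrightarrow>
       Yf a ([i, j] ! p) ([i, j] ! q) = cj (tw w) (Yf a (Suc p) (Suc q))"
    using transport[of "[i, j]"] assms by auto
  have n: "2 \<le> n" using card_bound[of "[i, j]" n] assms by auto
  have e: "\<And>a. Yf a i j = cj (tw w) (X 1 a)" using w(2)[of 0 1] Y12 by (simp add: numeral_eq_Suc)
  have c: "tw w \<in> carrier G" "\<And>a. X 1 a \<in> carrier G" using tw_closed[OF w(1)] n by auto
  show ?thesis using e c F2[of 1 a b] n by (simp add: cj_mult_r[symmetric])
qed

lemma St_rel2: assumes "1 \<le> i" "i \<le> n" "1 \<le> j" "j \<le> n" "i \<noteq> j"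
    "1 \<le> k" "k \<le> n" "1 \<le> l" "l \<le> n" "k \<noteq> l" "i \<noteq> l" "j \<noteq> k"
  shows "Yf a i j \<otimes> Yf b k l = Yf b k l \<otimes> Yf a i j"
proof -
  consider "i = k" "j = l" | "i = k" "j \<noteq> l" | "i \<noteq> k" "j = l" | "i \<noteq> k" "j \<noteq> l" by blast
  then show ?thesis
  proof cases
    case 1
    then show ?thesis using St_rel1[OF assms(1-5)] by (simp add: add.commute)
  next
    case 2
    have d: "distinct [i, j, l]" "set [i, j, l] \<subseteq> {1..n}" using assms 2 by auto
    obtain w where w: "w \<in> lists (br_gens n \<times> UNIV)"
      "\<And>p q a. p < length [i, j, l] \<Longrightarrow> q < length [i, j, l] \<Longrightarrow> p \<noteq> q \<Longrightarrow>
         Yf a ([i, j, l] ! p) ([i, j, l] ! q) = cj (tw w) (Yf a (Suc p) (Suc q))"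
      using transport[OF d] by blast
    have n: "3 \<le> n" using card_bound[OF d] by simp
    have e1: "Yf a i j = cj (tw w) (X 1 a)" using w(2)[of 0 1 a] Y12 n by (simp add: numeral_eq_Suc)
    have e2: "Yf b i l = cj (tw w) (cj (t 2) (X 1 b))" using w(2)[of 0 2 b] Y13 by (simp add: numeral_eq_Suc)
    have "X 1 a \<otimes> cj (t (1 + 1)) (X 1 b) \<otimes> X (1 + 1) 0 =
        X (1 + 1) 0 \<otimes> cj (t (1 + 1)) (X 1 (b + a * 0)) \<otimes> X 1 a"
      using n by (intro F8) auto
    then have "X 1 a \<otimes> cj (t 2) (X 1 b) = cj (t 2) (X 1 b) \<otimes> X 1 a" using n by (simp add: numeral_eq_Suc)
    then show ?thesis using e1 e2 2 n tw_closed[OF w(1)] by (simp add: comm_cj)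
  next
    case 3
    have d: "distinct [i, k, j]" "set [i, k, j] \<subseteq> {1..n}" using assms 3 by auto
    obtain w where w: "w \<in> lists (br_gens n \<times> UNIV)"
      "\<And>p q a. p < length [i, k, j] \<Longrightarrow> q < length [i, k, j] \<Longrightarrow> p \<noteq> q \<Longrightarrow>
         Yf a ([i, k, j] ! p) ([i, k, j] ! q) = cj (tw w) (Yf a (Suc p) (Suc q))"
      using transport[OF d] by blast
    have n: "3 \<le> n" using card_bound[OF d] by simp
    have e1: "Yf a i j = cj (tw w) (cj (t 2) (X 1 a))" using w(2)[of 0 2 a] Y13 by (simp add: numeral_eq_Suc)
    have e2: "Yf b k j = cj (tw w) (X 2 b)" using w(2)[of 1 2 b] Y23 by (simp add: numeral_eq_Suc)
    have "X 1 0 \<otimes> cj (t (1 + 1)) (X 1 a) \<otimes> X (1 + 1) b =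
        X (1 + 1) b \<otimes> cj (t (1 + 1)) (X 1 (a + 0 * b)) \<otimes> X 1 0"
      using n by (intro F8) auto
    then have "cj (t 2) (X 1 a) \<otimes> X 2 b = X 2 b \<otimes> cj (t 2) (X 1 a)" using n by (simp add: numeral_eq_Suc)
    then show ?thesis using e1 e2 3 n tw_closed[OF w(1)] by (simp add: comm_cj)
  next
    case 4
    have d: "distinct [i, j, k, l]" "set [i, j, k, l] \<subseteq> {1..n}" using assms 4 by auto
    obtain w where w: "w \<in> lists (br_gens n \<times> UNIV)"
      "\<And>p q a. p < length [i, j, k, l] \<Longrightarrow> q < length [i, j, k, l] \<Longrightarrow> p \<noteq> q \<Longrightarrow>
         Yf a ([i, j, k, l] ! p) ([i, j, k, l] ! q) = cj (tw w) (Yf a (Suc p) (Suc q))"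
      using transport[OF d] by blast
    have n: "4 \<le> n" using card_bound[OF d] by simp
    have e1: "Yf a i j = cj (tw w) (X 1 a)" using w(2)[of 0 1 a] Y12 n by (simp add: numeral_eq_Suc)
    have e2: "Yf b k l = cj (tw w) (X 3 b)" using w(2)[of 2 3 b] Y34 by (simp add: numeral_eq_Suc)
    have "X 1 a \<otimes> X 3 b = X 3 b \<otimes> X 1 a" using n by (intro D3XX) auto
    then show ?thesis using e1 e2 n tw_closed[OF w(1)] by (simp add: comm_cj)
  qed
qed

lemma St_rel3: assumes "1 \<le> i" "i \<le> n" "1 \<le> j" "j \<le> n" "i \<noteq> j"
    "1 \<le> k" "k \<le> n" "j \<noteq> k" "i \<noteq> k"
  shows "Yf a i j \<otimes> Yf b j k = Yf b j k \<otimes> Yf (a * b) i k \<otimes> Yf a i j"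
proof -
  have d: "distinct [i, j, k]" "set [i, j, k] \<subseteq> {1..n}" using assms by auto
  obtain w where w: "w \<in> lists (br_gens n \<times> UNIV)"
    "\<And>p q a. p < length [i, j, k] \<Longrightarrow> q < length [i, j, k] \<Longrightarrow> p \<noteq> q \<Longrightarrow>
       Yf a ([i, j, k] ! p) ([i, j, k] ! q) = cj (tw w) (Yf a (Suc p) (Suc q))"
    using transport[OF d] by blast
  have n: "3 \<le> n" using card_bound[OF d] by simp
  have e1: "Yf a i j = cj (tw w) (X 1 a)" using w(2)[of 0 1 a] Y12 n by (simp add: numeral_eq_Suc)
  have e2: "Yf b j k = cj (tw w) (X 2 b)" using w(2)[of 1 2 b] Y23 by (simp add: numeral_eq_Suc)
  have e3: "Yf (a * b) i k = cj (tw w) (cj (t 2) (X 1 (a * b)))" using w(2)[of 0 2 "a * b"] Y13 by (simp add: numeral_eq_Suc)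
  have "X 1 a \<otimes> cj (t (1 + 1)) (X 1 0) \<otimes> X (1 + 1) b =
      X (1 + 1) b \<otimes> cj (t (1 + 1)) (X 1 (0 + a * b)) \<otimes> X 1 a"
    using n by (intro F8) auto
  then have s: "X 1 a \<otimes> X 2 b = X 2 b \<otimes> cj (t 2) (X 1 (a * b)) \<otimes> X 1 a" using n by (simp add: numeral_eq_Suc)
  have c: "tw w \<in> carrier G" using tw_closed[OF w(1)] .
  have "cj (tw w) (X 1 a) \<otimes> cj (tw w) (X 2 b) = cj (tw w) (X 1 a \<otimes> X 2 b)"
    using c n by (simp add: cj_mult_r)
  also have "\<dots> = cj (tw w) (X 2 b \<otimes> cj (t 2) (X 1 (a * b)) \<otimes> X 1 a)" using s by simp
  also have "\<dots> = cj (tw w) (X 2 b) \<otimes> cj (tw w) (cj (t 2) (X 1 (a * b))) \<otimes> cj (tw w) (X 1 a)"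
    using c n by (simp add: cj_mult_r)
  finally show ?thesis using e1 e2 e3 by simp
qed

end


lemma word_eval_cong:
  "(\<And>g. g \<in> S \<Longrightarrow> f g = f' g) \<Longrightarrow> w \<in> lists (S \<times> UNIV) \<Longrightarrow> word_eval K f w = word_eval K f' w"
  by (induction w) auto

lemma word_eval_stmap:
  "word_eval K f (stmap \<sigma> w) = word_eval K (\<lambda>(i, j, a). f (\<sigma> i, \<sigma> j, a)) w"
proof (induction w)
  case (Cons x w)
  then show ?case by (cases x) auto
qed (simp add: stmap_def)

lemma (in group) cj_hom: "g \<in> carrier G \<Longrightarrow> cj g \<in> hom G G"
  by (rule homI) (auto simp: cj_mult_r)

context brA_grp
begin

definition psiSt :: "(nat \<times> nat \<times> 'a) word set \<Rightarrow> 'g" where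
  "psiSt = pres_map G (\<lambda>(i, j, a). Yf a i j)"

definition psiBr :: "nat word set \<Rightarrow> 'g" where
  "psiBr = pres_map G t"

definition psi :: "(nat \<times> nat \<times> 'a) word set \<times> nat word set \<Rightarrow> 'g" where
  "psi h = psiSt (fst h) \<otimes> psiBr (snd h)"

lemma Y_image: "(\<lambda>(i, j, a). Yf a i j) ` st_gens n \<subseteq> carrier G"
  by (auto simp: st_gens_def intro!: Yf_closed)

lemma rels_St: "rels_hold G (\<lambda>(i, j, a). Yf a i j) (st_gens n) (st_rels n)"
  unfolding rels_hold_def
proof (intro ballI impI)
  fix uv :: "(nat \<times> nat \<times> 'a) word \<times> (nat \<times> nat \<times> 'a) word"
  assume uv: "uv \<in> st_rels n"
  obtain u v where uvd: "uv = (u, v)" by force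
  from uv[unfolded uvd] consider
      (a) i j a b where "u = [((i, j, a), True), ((i, j, b), True)]" "v = [((i, j, a + b), True)]"
        "(i, j, a) \<in> st_gens n"
    | (c) i j k l a b where "u = [((i, j, a), True), ((k, l, b), True)]"
        "v = [((k, l, b), True), ((i, j, a), True)]"
        "(i, j, a) \<in> st_gens n" "(k, l, b) \<in> st_gens n" "i \<noteq> l" "j \<noteq> k"
    | (m) i j k a b where "u = [((i, j, a), True), ((j, k, b), True)]"
        "v = [((j, k, b), True), ((i, k, a * b), True), ((i, j, a), True)]"
        "(i, j, a) \<in> st_gens n" "(j, k, b) \<in> st_gens n" "i \<noteq> k"
    unfolding st_rels_def by blast
  then show "case uv of (u, v) \<Rightarrow> u \<in> lists (st_gens n \<times> UNIV) \<longrightarrow> v \<in> lists (st_gens n \<times> UNIV) \<longrightarrow>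
      word_eval G (\<lambda>(i, j, a). Yf a i j) u = word_eval G (\<lambda>(i, j, a). Yf a i j) v"
  proof cases
    case a
    then show ?thesis using St_rel1[of i j a b] Yf_closed[of i j] by (auto simp: uvd st_gens_def)
  next
    case c
    then show ?thesis using St_rel2[of i j k l a b] Yf_closed[of i j] Yf_closed[of k l]
      by (auto simp: uvd st_gens_def)
  next
    case m
    then show ?thesis using St_rel3[of i j k a b] Yf_closed[of i j] Yf_closed[of j k]
        Yf_closed[of i k "a * b"]
      by (auto simp: uvd st_gens_def m_assoc)
  qed
qed

lemma rels_Br: "rels_hold G t (br_gens n) (br_rels n)"
  unfolding rels_hold_def
proof (intro ballI impI)
  fix uv assume uv: "uv \<in> br_rels n"
  obtain u v where uvd: "uv = (u, v)" by force
  from uv[unfolded uvd] consider (c) i j where "u = [(i, True), (j, True)]" "v = [(j, True), (i, True)]"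
      "1 \<le> i" "i \<le> n - 1" "1 \<le> j" "j \<le> n - 1" "i + 2 \<le> j \<or> j + 2 \<le> i"
    | (b) i where "u = [(i, True), (i + 1, True), (i, True)]" "v = [(i + 1, True), (i, True), (i + 1, True)]"
      "1 \<le> i" "i + 1 \<le> n - 1"
    unfolding br_rels_def by blast
  then show "case uv of (u, v) \<Rightarrow> u \<in> lists (br_gens n \<times> UNIV) \<longrightarrow> v \<in> lists (br_gens n \<times> UNIV) \<longrightarrow>
      word_eval G t u = word_eval G t v"
  proof cases
    case c
    then show ?thesis using D3t[of i j] by (simp add: uvd)
  next
    case b
    then show ?thesis using F4[of i] by (simp add: uvd m_assoc)
  qed
qed

lemma psiSt_hom: "psiSt \<in> hom (St n) G"
  unfolding psiSt_def St_pres by (rule pres_map_hom[OF is_group Y_image rels_St])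

lemma psiBr_hom: "psiBr \<in> hom (Br n) G"
  unfolding psiBr_def Br_pres by (rule pres_map_hom[OF is_group t_image rels_Br])

lemma psiSt_class: "w \<in> lists (st_gens n \<times> UNIV) \<Longrightarrow> psiSt (stc n w) = word_eval G (\<lambda>(i, j, a). Yf a i j) w"
  unfolding psiSt_def by (rule pres_map_class[OF is_group Y_image rels_St])

lemma psiBr_class: "w \<in> lists (br_gens n \<times> UNIV) \<Longrightarrow> psiBr (brc n w) = tw w"
  unfolding psiBr_def tw_def by (rule pres_map_class[OF is_group t_image rels_Br])

lemma psiSt_act:
  assumes "s \<in> carrier (St n)" "b \<in> carrier (Br n)"
  shows "psiSt (st_act n (perm_of_braid b) s) = cj (psiBr b) (psiSt s)"
proof -
  obtain u where u: "u \<in> lists (st_gens n \<times> UNIV)" "s = stc n u" using assms(1) by (rule St_carrierE)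
  obtain v where v: "v \<in> lists (br_gens n \<times> UNIV)" "b = brc n v" using assms(2) by (rule Br_carrierE)
  let ?\<sigma> = "perm_of_word v"
  have g: "good n ?\<sigma>" using good_perm[OF v(1)] .
  have tc: "tw v \<in> carrier G" using tw_closed[OF v(1)] .
  have "psiSt (st_act n (perm_of_braid b) s) = psiSt (stc n (stmap ?\<sigma> u))"
    using u v g by (simp add: perm_braid_class st_act_class)
  also have "\<dots> = word_eval G (\<lambda>(i, j, a). Yf a i j) (stmap ?\<sigma> u)"
    using stmap_lists[OF g u(1)] by (rule psiSt_class)
  also have "\<dots> = word_eval G (\<lambda>(i, j, a). Yf a (?\<sigma> i) (?\<sigma> j)) u"
    by (simp add: word_eval_stmap case_prod_beta)
  also have "\<dots> = word_eval G (cj (tw v) \<circ> (\<lambda>(i, j, a). Yf a i j)) u"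
  proof (rule word_eval_cong[OF _ u(1)])
    fix g :: "nat \<times> nat \<times> 'a" assume "g \<in> st_gens n"
    then obtain i j a where "g = (i, j, a)" "1 \<le> i" "i \<le> n" "1 \<le> j" "j \<le> n" "i \<noteq> j"
      by (auto simp: st_gens_def)
    then show "(\<lambda>(i, j, a). Yf a (?\<sigma> i) (?\<sigma> j)) g = (cj (tw v) \<circ> (\<lambda>(i, j, a). Yf a i j)) g"
      using TL[OF v(1)] by simp
  qed
  also have "\<dots> = cj (tw v) (word_eval G (\<lambda>(i, j, a). Yf a i j) u)"
    by (rule hom_word_eval[OF is_group is_group cj_hom[OF tc] Y_image u(1), symmetric])
  also have "\<dots> = cj (psiBr b) (psiSt s)" using u v by (simp add: psiSt_class psiBr_class)
  finally show ?thesis .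
qed

lemma psi_hom: "psi \<in> hom (StBr n) G"
proof (rule homI)
  fix h :: "(nat \<times> nat \<times> 'a) word set \<times> nat word set" assume "h \<in> carrier (StBr n)"
  then show "psi h \<in> carrier G"
    using hom_in_carrier[OF psiSt_hom] hom_in_carrier[OF psiBr_hom]
    by (auto simp: psi_def StBr_carrier)
next
  fix h h' :: "(nat \<times> nat \<times> 'a) word set \<times> nat word set" assume hh: "h \<in> carrier (StBr n)" "h' \<in> carrier (StBr n)"
  obtain s b where sb: "h = (s, b)" "s \<in> carrier (St n)" "b \<in> carrier (Br n)"
    using hh(1) by (auto simp: StBr_carrier)
  obtain s' b' where sb': "h' = (s', b')" "s' \<in> carrier (St n)" "b' \<in> carrier (Br n)"
    using hh(2) by (auto simp: StBr_carrier)
  have c: "psiSt s \<in> carrier G" "psiSt s' \<in> carrier G" "psiBr b \<in> carrier G" "psiBr b' \<in> carrier G"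
    using sb sb' hom_in_carrier[OF psiSt_hom] hom_in_carrier[OF psiBr_hom] by auto
  have ac: "st_act n (perm_of_braid b) s' \<in> carrier (St n)"
    using sb sb' by (simp add: st_act_carrier good_braid)
  have "psi (h \<otimes>\<^bsub>StBr n\<^esub> h') =
      psiSt (s \<otimes>\<^bsub>St n\<^esub> st_act n (perm_of_braid b) s') \<otimes> psiBr (b \<otimes>\<^bsub>Br n\<^esub> b')"
    using sb sb' by (simp add: psi_def StBr_mult)
  also have "\<dots> = psiSt s \<otimes> cj (psiBr b) (psiSt s') \<otimes> (psiBr b \<otimes> psiBr b')"
    using sb sb' ac hom_mult[OF psiSt_hom] hom_mult[OF psiBr_hom] psiSt_act by simp
  also have "\<dots> = psiSt s \<otimes> psiBr b \<otimes> (psiSt s' \<otimes> psiBr b')"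
    using c by (simp add: cj_def m_assoc)
  finally show "psi (h \<otimes>\<^bsub>StBr n\<^esub> h') = psi h \<otimes> psi h'" using sb sb' by (simp add: psi_def)
qed

end


abbreviation xs :: "nat \<Rightarrow> nat \<Rightarrow> nat \<Rightarrow> 'a::ring \<Rightarrow> (nat \<times> nat \<times> 'a) word set" where
  "xs n i j a \<equiv> stc n [((i, j, a), True)]"

abbreviation yb :: "nat \<Rightarrow> nat \<Rightarrow> nat word set" where
  "yb n i \<equiv> brc n [(i, True)]"

lemma xs_carrier: "1 \<le> i \<Longrightarrow> i \<le> n \<Longrightarrow> 1 \<le> j \<Longrightarrow> j \<le> n \<Longrightarrow> i \<noteq> j \<Longrightarrow>
    (xs n i j a :: (nat \<times> nat \<times> 'a::ring) word set) \<in> carrier (St n)"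
  unfolding St_pres by (rule class_in_carrier) (auto simp: st_gens_def)

lemma yb_carrier: "1 \<le> i \<Longrightarrow> i \<le> n - 1 \<Longrightarrow> yb n i \<in> carrier (Br n)"
  unfolding Br_pres by (rule class_in_carrier) (auto simp: br_gens_def)

lemma St_R1: assumes "1 \<le> i" "i \<le> n" "1 \<le> j" "j \<le> n" "i \<noteq> j"
  shows "xs n i j a \<otimes>\<^bsub>St n\<^esub> xs n i j b = (xs n i j (a + b) :: (nat \<times> nat \<times> 'a::ring) word set)"
proof -
  have r: "([((i, j, a), True), ((i, j, b), True)], [((i, j, a + b), True)]) \<in> st_rels n"
    using assms unfolding st_rels_def st_gens_def by blast
  show ?thesis unfolding St_pres using assms
    by (subst mult_class) (auto simp: st_gens_def intro!: word_class_eqI pres_eq.rel[OF r])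
qed

lemma St_R2: assumes "1 \<le> i" "i \<le> n" "1 \<le> j" "j \<le> n" "i \<noteq> j"
    "1 \<le> k" "k \<le> n" "1 \<le> l" "l \<le> n" "k \<noteq> l" "i \<noteq> l" "j \<noteq> k"
  shows "xs n i j a \<otimes>\<^bsub>St n\<^esub> xs n k l b = (xs n k l b \<otimes>\<^bsub>St n\<^esub> xs n i j a :: (nat \<times> nat \<times> 'a::ring) word set)"
proof -
  have r: "([((i, j, a), True), ((k, l, b), True)], [((k, l, b), True), ((i, j, a), True)]) \<in> st_rels n"
    using assms unfolding st_rels_def st_gens_def by blast
  show ?thesis unfolding St_pres using assms
    by (subst mult_class, simp add: st_gens_def, simp add: st_gens_def,
        subst mult_class, simp add: st_gens_def, simp add: st_gens_def)
       (auto simp: st_gens_def intro!: word_class_eqI pres_eq.rel[OF r])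
qed

lemma St_R3: assumes "1 \<le> i" "i \<le> n" "1 \<le> j" "j \<le> n" "i \<noteq> j"
    "1 \<le> k" "k \<le> n" "j \<noteq> k" "i \<noteq> k"
  shows "xs n i j a \<otimes>\<^bsub>St n\<^esub> xs n j k b =
    (xs n j k b \<otimes>\<^bsub>St n\<^esub> xs n i k (a * b) \<otimes>\<^bsub>St n\<^esub> xs n i j a :: (nat \<times> nat \<times> 'a::ring) word set)"
proof -
  have r: "([((i, j, a), True), ((j, k, b), True)], [((j, k, b), True), ((i, k, a * b), True), ((i, j, a), True)])
      \<in> st_rels n"
    using assms unfolding st_rels_def st_gens_def by blast
  have l: "[((j, k, b), True)] \<in> lists (st_gens n \<times> UNIV)" "[((i, k, a * b), True)] \<in> lists (st_gens n \<times> UNIV)"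
    "[((i, j, a), True)] \<in> lists (st_gens n \<times> UNIV)" "[((j, k, b), True), ((i, k, a * b), True)] \<in> lists (st_gens n \<times> UNIV)"
    using assms by (auto simp: st_gens_def)
  show ?thesis unfolding St_pres using assms
    by (simp only: mult_class l append.simps)
       (auto simp: st_gens_def intro!: word_class_eqI pres_eq.rel[OF r])
qed

lemma xs_zero: assumes "1 \<le> i" "i \<le> n" "1 \<le> j" "j \<le> n" "i \<noteq> j"
  shows "xs n i j 0 = (\<one>\<^bsub>St n\<^esub> :: (nat \<times> nat \<times> 'a::ring) word set)"
proof -
  interpret S: group "St n :: (nat \<times> nat \<times> 'a) word set monoid" by (rule group_St)
  have "xs n i j 0 \<otimes>\<^bsub>St n\<^esub> xs n i j 0 = (xs n i j 0 :: (nat \<times> nat \<times> 'a) word set)"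
    using St_R1[OF assms, of 0 0] by simp
  then show ?thesis using S.l_cancel_one[OF xs_carrier[OF assms] xs_carrier[OF assms]] by simp
qed

lemma St_A2: assumes "1 \<le> i" "i \<le> n" "1 \<le> j" "j \<le> n" "i \<noteq> j"
    "1 \<le> k" "k \<le> n" "j \<noteq> k" "i \<noteq> k"
  shows "xs n i j a \<otimes>\<^bsub>St n\<^esub> (xs n i k b \<otimes>\<^bsub>St n\<^esub> xs n j k c) =
    (xs n j k c \<otimes>\<^bsub>St n\<^esub> (xs n i k (b + a * c) \<otimes>\<^bsub>St n\<^esub> xs n i j a) :: (nat \<times> nat \<times> 'a::ring) word set)"
proof -
  interpret S: group "St n :: (nat \<times> nat \<times> 'a) word set monoid" by (rule group_St)
  have c: "\<And>p q d. 1 \<le> p \<Longrightarrow> p \<le> n \<Longrightarrow> 1 \<le> q \<Longrightarrow> q \<le> n \<Longrightarrow> p \<noteq> q \<Longrightarrow>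
      (xs n p q d :: (nat \<times> nat \<times> 'a) word set) \<in> carrier (St n)"
    by (rule xs_carrier)
  have c12: "\<And>d. (xs n i j d :: (nat \<times> nat \<times> 'a) word set) \<in> carrier (St n)" using c assms by blast
  have c13: "\<And>d. (xs n i k d :: (nat \<times> nat \<times> 'a) word set) \<in> carrier (St n)" using c assms by blast
  have c23: "\<And>d. (xs n j k d :: (nat \<times> nat \<times> 'a) word set) \<in> carrier (St n)" using c assms by blast
  have "xs n i j a \<otimes>\<^bsub>St n\<^esub> (xs n i k b \<otimes>\<^bsub>St n\<^esub> xs n j k c) =
      xs n i j a \<otimes>\<^bsub>St n\<^esub> (xs n j k c \<otimes>\<^bsub>St n\<^esub> xs n i k b)"
    using St_R2[where i=i and j=k and k=j and l=k and a=b and b=c and n=n] assms by simp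
  also have "\<dots> = (xs n i j a \<otimes>\<^bsub>St n\<^esub> xs n j k c) \<otimes>\<^bsub>St n\<^esub> xs n i k b"
    using c12 c13 c23 by (simp add: S.m_assoc)
  also have "\<dots> = xs n j k c \<otimes>\<^bsub>St n\<^esub> xs n i k (a * c) \<otimes>\<^bsub>St n\<^esub> xs n i j a \<otimes>\<^bsub>St n\<^esub> xs n i k b"
    using St_R3[OF assms, of a c] by simp
  also have "\<dots> = xs n j k c \<otimes>\<^bsub>St n\<^esub> xs n i k (a * c) \<otimes>\<^bsub>St n\<^esub> (xs n i j a \<otimes>\<^bsub>St n\<^esub> xs n i k b)"
    using c12 c13 c23 by (simp add: S.m_assoc)
  also have "\<dots> = xs n j k c \<otimes>\<^bsub>St n\<^esub> xs n i k (a * c) \<otimes>\<^bsub>St n\<^esub> (xs n i k b \<otimes>\<^bsub>St n\<^esub> xs n i j a)"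
    using St_R2[where i=i and j=j and k=i and l=k and a=a and b=b and n=n] assms by simp
  also have "\<dots> = xs n j k c \<otimes>\<^bsub>St n\<^esub> (xs n i k (a * c) \<otimes>\<^bsub>St n\<^esub> xs n i k b) \<otimes>\<^bsub>St n\<^esub> xs n i j a"
    using c12 c13 c23 by (simp add: S.m_assoc)
  also have "\<dots> = xs n j k c \<otimes>\<^bsub>St n\<^esub> (xs n i k (b + a * c) \<otimes>\<^bsub>St n\<^esub> xs n i j a)"
    using St_R1[where i=i and j=k and a="a * c" and b=b and n=n] assms c12 c13 c23 by (simp add: S.m_assoc add.commute)
  finally show ?thesis .
qed

lemma Br_mult2: "1 \<le> i \<Longrightarrow> i \<le> n - 1 \<Longrightarrow> 1 \<le> j \<Longrightarrow> j \<le> n - 1 \<Longrightarrow>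
    yb n i \<otimes>\<^bsub>Br n\<^esub> yb n j = brc n [(i, True), (j, True)]"
  unfolding Br_pres by (subst mult_class) (auto simp: br_gens_def)

lemma Br_mult3: "1 \<le> i \<Longrightarrow> i \<le> n - 1 \<Longrightarrow> 1 \<le> j \<Longrightarrow> j \<le> n - 1 \<Longrightarrow> 1 \<le> k \<Longrightarrow> k \<le> n - 1 \<Longrightarrow>
    yb n i \<otimes>\<^bsub>Br n\<^esub> (yb n j \<otimes>\<^bsub>Br n\<^esub> yb n k) = brc n [(i, True), (j, True), (k, True)]"
  unfolding Br_pres by (subst mult_class, simp add: br_gens_def, simp add: br_gens_def,
    subst mult_class) (auto simp: br_gens_def)

lemma perm_yb: "1 \<le> i \<Longrightarrow> i \<le> n - 1 \<Longrightarrow> perm_of_braid (yb n i) = sw i"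
  by (subst perm_braid_class) (auto simp: br_gens_def)

lemma phi_gen_eq: assumes "1 \<le> i" "i \<le> n - 1"
  shows "phi_gen n (i, a) = (xs n i (i + 1) a :: (nat \<times> nat \<times> 'a::ring) word set, yb n i)"
proof -
  interpret S: group "St n :: (nat \<times> nat \<times> 'a) word set monoid" by (rule group_St)
  interpret B: group "Br n" by (rule group_Br)
  have c: "(xs n i (i + 1) a :: (nat \<times> nat \<times> 'a) word set) \<in> carrier (St n)" "yb n i \<in> carrier (Br n)"
    using assms by (auto intro: xs_carrier yb_carrier)
  show ?thesis using c
    by (simp add: phi_gen_def StBr_mult perm_braid_one st_act_id)
qed


lemma StBr2: assumes "1 \<le> i1" "i1 \<le> n - 1" "1 \<le> i2" "i2 \<le> n - 1"
    "x1 \<in> carrier (St n)" "x2 \<in> carrier (St n)"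
  shows "(x1, yb n i1) \<otimes>\<^bsub>StBr n\<^esub> (x2 :: (nat \<times> nat \<times> 'a::ring) word set, yb n i2) =
    (x1 \<otimes>\<^bsub>St n\<^esub> st_act n (sw i1) x2, yb n i1 \<otimes>\<^bsub>Br n\<^esub> yb n i2)"
  using assms by (simp add: StBr_mult perm_yb)

lemma StBr3: assumes "1 \<le> i1" "i1 \<le> n - 1" "1 \<le> i2" "i2 \<le> n - 1" "1 \<le> i3" "i3 \<le> n - 1"
    "x1 \<in> carrier (St n)" "x2 \<in> carrier (St n)" "x3 \<in> carrier (St n)"
  shows "(x1, yb n i1) \<otimes>\<^bsub>StBr n\<^esub> ((x2, yb n i2) \<otimes>\<^bsub>StBr n\<^esub> (x3 :: (nat \<times> nat \<times> 'a::ring) word set, yb n i3)) =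
    (x1 \<otimes>\<^bsub>St n\<^esub> (st_act n (sw i1) x2 \<otimes>\<^bsub>St n\<^esub> st_act n (sw i1 \<circ> sw i2) x3),
     yb n i1 \<otimes>\<^bsub>Br n\<^esub> (yb n i2 \<otimes>\<^bsub>Br n\<^esub> yb n i3))"
proof -
  have g: "good n (sw i1)" "good n (sw i2)" by (rule good_sw[OF assms(1,2)], rule good_sw[OF assms(3,4)])
  have "perm_of_braid (yb n i1) = sw i1" "perm_of_braid (yb n i2) = sw i2" using assms by (auto simp: perm_yb)
  then show ?thesis using assms g
    by (simp add: StBr_mult st_act_mult st_act_carrier st_act_comp)
qed

lemma word_eval3:
  assumes "group K" "f g3 \<in> carrier K"
  shows "word_eval K f [(g1, True), (g2, True), (g3, True)] = f g1 \<otimes>\<^bsub>K\<^esub> (f g2 \<otimes>\<^bsub>K\<^esub> f g3)"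
  using assms by (simp add: group.is_monoid monoid.r_one)

lemma word_eval2:
  assumes "group K" "f g2 \<in> carrier K"
  shows "word_eval K f [(g1, True), (g2, True)] = f g1 \<otimes>\<^bsub>K\<^esub> f g2"
  using assms by (simp add: group.is_monoid monoid.r_one)

lemma phi_gen_carrier: assumes "1 \<le> i" "i \<le> n - 1"
  shows "phi_gen n (i, a) \<in> carrier (StBr n :: ((nat \<times> nat \<times> 'a::ring) word set \<times> nat word set) monoid)"
  using assms by (simp add: phi_gen_eq StBr_carrier xs_carrier yb_carrier)

lemma Br_comm: assumes "1 \<le> i" "i \<le> n - 1" "1 \<le> j" "j \<le> n - 1" "i + 2 \<le> j \<or> j + 2 \<le> i"
  shows "yb n i \<otimes>\<^bsub>Br n\<^esub> yb n j = yb n j \<otimes>\<^bsub>Br n\<^esub> yb n i"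
proof -
  have r: "([(i, True), (j, True)], [(j, True), (i, True)]) \<in> br_rels n"
    using assms unfolding br_rels_def by blast
  show ?thesis using assms
    by (simp add: Br_mult2) (auto simp: br_gens_def intro!: word_class_eqI pres_eq.rel[OF r])
qed

lemma Br_braid: assumes "1 \<le> i" "i + 1 \<le> n - 1"
  shows "yb n i \<otimes>\<^bsub>Br n\<^esub> (yb n (i + 1) \<otimes>\<^bsub>Br n\<^esub> yb n i) =
    yb n (i + 1) \<otimes>\<^bsub>Br n\<^esub> (yb n i \<otimes>\<^bsub>Br n\<^esub> yb n (i + 1))"
proof -
  have r: "([(i, True), (i + 1, True), (i, True)], [(i + 1, True), (i, True), (i + 1, True)]) \<in> br_rels n"
    using assms unfolding br_rels_def by blast
  show ?thesis using assms r
    by (subst (1 2) Br_mult3) (auto simp: br_gens_def intro!: word_class_eqI pres_eq.rel)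
qed

lemma phi_rels:
  "\<forall>(u, v) \<in> brA_rels n.
     word_eval (StBr n) (phi_gen n) u = word_eval (StBr n) (phi_gen n) (v :: (nat \<times> 'a::ring) word)"
proof (intro ballI)
  fix uv :: "(nat \<times> 'a) word \<times> (nat \<times> 'a) word"
  assume uv: "uv \<in> brA_rels n"
  obtain u v where uvd: "uv = (u, v)" by force
  have gH: "group (StBr n :: ((nat \<times> nat \<times> 'a) word set \<times> nat word set) monoid)" by (rule group_StBr)
  interpret S: group "St n :: (nat \<times> nat \<times> 'a) word set monoid" by (rule group_St)
  interpret B: group "Br n" by (rule group_Br)
  from uv[unfolded uvd] consider
      (a1) i a b where "u = [((i, a), True), ((i, 0), True), ((i, b), True)]"
        "v = [((i, 0), True), ((i, 0), True), ((i, a + b), True)]" "1 \<le> i" "i \<le> n - 1"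
    | (c) i j a b where "u = [((i, a), True), ((j, b), True)]" "v = [((j, b), True), ((i, a), True)]"
        "1 \<le> i" "i \<le> n - 1" "1 \<le> j" "j \<le> n - 1" "i + 2 \<le> j \<or> j + 2 \<le> i"
    | (a2) i a b c where "u = [((i, a), True), ((i + 1, b), True), ((i, c), True)]"
        "v = [((i + 1, c), True), ((i, b + a * c), True), ((i + 1, a), True)]" "1 \<le> i" "i + 1 \<le> n - 1"
    unfolding brA_rels_def by blast
  then show "case uv of (u, v) \<Rightarrow> word_eval (StBr n) (phi_gen n) u = word_eval (StBr n) (phi_gen n) v"
  proof cases
    case a1
    have i: "1 \<le> i" "i \<le> n" "1 \<le> i + 1" "i + 1 \<le> n" "i \<noteq> i + 1" "i + 1 \<noteq> i" using a1 by auto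
    have g: "good n (sw i)" using a1 by (intro good_sw) auto
    have xc: "\<And>d. (xs n i (i + 1) d :: (nat \<times> nat \<times> 'a) word set) \<in> carrier (St n)"
      using i by (intro xs_carrier) auto
    have z: "st_act n (sw i) (xs n i (i + 1) 0) = (\<one>\<^bsub>St n\<^esub> :: (nat \<times> nat \<times> 'a) word set)"
      using xs_zero[OF i(1-5), where 'a='a] st_act_one[OF g, where 'a='a] by simp
    have sq: "sw i \<circ> sw i = id" by simp
    have L: "word_eval (StBr n) (phi_gen n) u =
      (xs n i (i + 1) a \<otimes>\<^bsub>St n\<^esub> (\<one>\<^bsub>St n\<^esub> \<otimes>\<^bsub>St n\<^esub> xs n i (i + 1) b), yb n i \<otimes>\<^bsub>Br n\<^esub> (yb n i \<otimes>\<^bsub>Br n\<^esub> yb n i))"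
      using a1 phi_gen_carrier[of i n b] xc z by (simp add: monoid.r_one[OF group.is_monoid[OF gH]] phi_gen_eq StBr3 st_act_id)
    have R: "word_eval (StBr n) (phi_gen n) v =
      (xs n i (i + 1) 0 \<otimes>\<^bsub>St n\<^esub> (\<one>\<^bsub>St n\<^esub> \<otimes>\<^bsub>St n\<^esub> xs n i (i + 1) (a + b)), yb n i \<otimes>\<^bsub>Br n\<^esub> (yb n i \<otimes>\<^bsub>Br n\<^esub> yb n i))"
      using a1 phi_gen_carrier[of i n "a + b"] xc z by (simp add: monoid.r_one[OF group.is_monoid[OF gH]] phi_gen_eq StBr3 st_act_id)
    show ?thesis using L R xs_zero[OF i(1-5), where 'a='a] St_R1[OF i(1-5), where 'a='a] xc
      by (simp add: uvd)
  next
    case c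
    have g: "good n (sw i)" "good n (sw j)" by (rule good_sw[OF c(3,4)], rule good_sw[OF c(5,6)])
    have ij: "1 \<le> i" "i \<le> n" "1 \<le> i + 1" "i + 1 \<le> n" "i \<noteq> i + 1"
      "1 \<le> j" "j \<le> n" "1 \<le> j + 1" "j + 1 \<le> n" "j \<noteq> j + 1" "i \<noteq> j + 1" "i + 1 \<noteq> j"
      using c by auto
    have xc: "\<And>d. (xs n i (i + 1) d :: (nat \<times> nat \<times> 'a) word set) \<in> carrier (St n)"
      "\<And>d. (xs n j (j + 1) d :: (nat \<times> nat \<times> 'a) word set) \<in> carrier (St n)"
      using ij by (auto intro: xs_carrier)
    have sg: "(j, j + 1, b) \<in> st_gens n" "(i, i + 1, a) \<in> st_gens n" using ij by (auto simp: st_gens_def)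
    have tv: "sw i j = j" "sw i (j + 1) = j + 1" "sw j i = i" "sw j (i + 1) = i + 1"
      using c by (auto simp: Transposition.transpose_def)
    have a1: "st_act n (sw i) (xs n j (j + 1) b) = (xs n j (j + 1) b :: (nat \<times> nat \<times> 'a) word set)"
      using st_act_gen[OF g(1) sg(1)] tv by simp
    have a2: "st_act n (sw j) (xs n i (i + 1) a) = (xs n i (i + 1) a :: (nat \<times> nat \<times> 'a) word set)"
      using st_act_gen[OF g(2) sg(2)] tv by simp
    have L: "word_eval (StBr n) (phi_gen n) u =
        (xs n i (i + 1) a \<otimes>\<^bsub>St n\<^esub> xs n j (j + 1) b, yb n i \<otimes>\<^bsub>Br n\<^esub> yb n j)"
      using c phi_gen_carrier[of j n b] xc a1 StBr2[OF c(3-6) xc(1) xc(2), of a b]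
      by (simp add: monoid.r_one[OF group.is_monoid[OF gH]] phi_gen_eq)
    have R: "word_eval (StBr n) (phi_gen n) v =
        (xs n j (j + 1) b \<otimes>\<^bsub>St n\<^esub> xs n i (i + 1) a, yb n j \<otimes>\<^bsub>Br n\<^esub> yb n i)"
      using c phi_gen_carrier[of i n a] xc a2 StBr2[OF c(5,6,3,4) xc(2) xc(1), of b a]
      by (simp add: monoid.r_one[OF group.is_monoid[OF gH]] phi_gen_eq)
    have "xs n i (i + 1) a \<otimes>\<^bsub>St n\<^esub> xs n j (j + 1) b =
        (xs n j (j + 1) b \<otimes>\<^bsub>St n\<^esub> xs n i (i + 1) a :: (nat \<times> nat \<times> 'a) word set)"
      using ij by (intro St_R2) auto
    then show ?thesis using L R Br_comm[OF c(3-7)] by (simp add: uvd)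
  next
    case a2
    have g: "good n (sw i)" "good n (sw (i + 1))" using a2 by (intro good_sw; simp)+
    have gc: "good n (sw i \<circ> sw (i + 1))" "good n (sw (i + 1) \<circ> sw i)" using g by (auto intro: good_comp)
    have ij: "1 \<le> i" "i \<le> n" "1 \<le> i + 1" "i + 1 \<le> n" "1 \<le> i + 2" "i + 2 \<le> n"
      "i \<noteq> i + 1" "i + 1 \<noteq> i + 2" "i \<noteq> i + 2"
      using a2 by auto
    have xc: "\<And>d. (xs n i (i + 1) d :: (nat \<times> nat \<times> 'a) word set) \<in> carrier (St n)"
      "\<And>d. (xs n (i + 1) (i + 2) d :: (nat \<times> nat \<times> 'a) word set) \<in> carrier (St n)"
      using ij by (auto intro: xs_carrier)
    have s1: "st_act n (sw i) (xs n (i + 1) (i + 2) d) = (xs n i (i + 2) d :: (nat \<times> nat \<times> 'a) word set)" for d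
      using st_act_gen[OF g(1), of "i + 1" "i + 2" d] ij by (simp add: st_gens_def)
    have s2: "st_act n (sw i \<circ> sw (i + 1)) (xs n i (i + 1) d) = (xs n (i + 1) (i + 2) d :: (nat \<times> nat \<times> 'a) word set)" for d
      using st_act_gen[OF gc(1), of i "i + 1" d] ij by (simp add: st_gens_def)
    have s3: "st_act n (sw (i + 1)) (xs n i (i + 1) d) = (xs n i (i + 2) d :: (nat \<times> nat \<times> 'a) word set)" for d
      using st_act_gen[OF g(2), of i "i + 1" d] ij by (simp add: st_gens_def)
    have s4: "st_act n (sw (i + 1) \<circ> sw i) (xs n (i + 1) (i + 2) d) = (xs n i (i + 1) d :: (nat \<times> nat \<times> 'a) word set)" for d
      using st_act_gen[OF gc(2), of "i + 1" "i + 2" d] ij by (simp add: st_gens_def)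
    have i1: "1 \<le> i" "i \<le> n - 1" "1 \<le> i + 1" "i + 1 \<le> n - 1" using a2 by auto
    have L: "word_eval (StBr n) (phi_gen n) u =
        (xs n i (i + 1) a \<otimes>\<^bsub>St n\<^esub> (xs n i (i + 2) b \<otimes>\<^bsub>St n\<^esub> xs n (i + 1) (i + 2) c),
         yb n i \<otimes>\<^bsub>Br n\<^esub> (yb n (i + 1) \<otimes>\<^bsub>Br n\<^esub> yb n i))"
    proof -
      have "word_eval (StBr n) (phi_gen n) u = phi_gen n (i, a) \<otimes>\<^bsub>StBr n\<^esub> (phi_gen n (i + 1, b) \<otimes>\<^bsub>StBr n\<^esub> phi_gen n (i, c))"
        using a2 phi_gen_carrier[of i n c] by (simp add: monoid.r_one[OF group.is_monoid[OF gH]])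
      also have "\<dots> = (xs n i (i + 1) a, yb n i) \<otimes>\<^bsub>StBr n\<^esub> ((xs n (i + 1) (i + 1 + 1) b, yb n (i + 1)) \<otimes>\<^bsub>StBr n\<^esub> (xs n i (i + 1) c, yb n i))"
        using a2 i1 by (simp only: phi_gen_eq)
      also have "\<dots> = (xs n i (i + 1) a \<otimes>\<^bsub>St n\<^esub> (st_act n (sw i) (xs n (i + 1) (i + 2) b) \<otimes>\<^bsub>St n\<^esub> st_act n (sw i \<circ> sw (i + 1)) (xs n i (i + 1) c)),
         yb n i \<otimes>\<^bsub>Br n\<^esub> (yb n (i + 1) \<otimes>\<^bsub>Br n\<^esub> yb n i))"
        using StBr3[OF i1(1,2) i1(3,4) i1(1,2) xc(1) xc(2) xc(1)] by (simp add: numeral_2_eq_2)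
      finally show ?thesis using s1 s2 by simp
    qed
    have R: "word_eval (StBr n) (phi_gen n) v =
        (xs n (i + 1) (i + 2) c \<otimes>\<^bsub>St n\<^esub> (xs n i (i + 2) (b + a * c) \<otimes>\<^bsub>St n\<^esub> xs n i (i + 1) a),
         yb n (i + 1) \<otimes>\<^bsub>Br n\<^esub> (yb n i \<otimes>\<^bsub>Br n\<^esub> yb n (i + 1)))"
    proof -
      have "word_eval (StBr n) (phi_gen n) v = phi_gen n (i + 1, c) \<otimes>\<^bsub>StBr n\<^esub> (phi_gen n (i, b + a * c) \<otimes>\<^bsub>StBr n\<^esub> phi_gen n (i + 1, a))"
        using a2 phi_gen_carrier[of "i + 1" n a] by (simp add: monoid.r_one[OF group.is_monoid[OF gH]])
      also have "\<dots> = (xs n (i + 1) (i + 1 + 1) c, yb n (i + 1)) \<otimes>\<^bsub>StBr n\<^esub> ((xs n i (i + 1) (b + a * c), yb n i) \<otimes>\<^bsub>StBr n\<^esub> (xs n (i + 1) (i + 1 + 1) a, yb n (i + 1)))"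
        using a2 i1 by (simp only: phi_gen_eq)
      also have "\<dots> = (xs n (i + 1) (i + 2) c \<otimes>\<^bsub>St n\<^esub> (st_act n (sw (i + 1)) (xs n i (i + 1) (b + a * c)) \<otimes>\<^bsub>St n\<^esub> st_act n (sw (i + 1) \<circ> sw i) (xs n (i + 1) (i + 2) a)),
         yb n (i + 1) \<otimes>\<^bsub>Br n\<^esub> (yb n i \<otimes>\<^bsub>Br n\<^esub> yb n (i + 1)))"
        using StBr3[OF i1(3,4) i1(1,2) i1(3,4) xc(2) xc(1) xc(2)] by (simp add: numeral_2_eq_2)
      finally show ?thesis using s3 s4 by simp
    qed
    have "xs n i (i + 1) a \<otimes>\<^bsub>St n\<^esub> (xs n i (i + 2) b \<otimes>\<^bsub>St n\<^esub> xs n (i + 1) (i + 2) c) =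
        (xs n (i + 1) (i + 2) c \<otimes>\<^bsub>St n\<^esub> (xs n i (i + 2) (b + a * c) \<otimes>\<^bsub>St n\<^esub> xs n i (i + 1) a) :: (nat \<times> nat \<times> 'a) word set)"
      using ij by (intro St_A2) auto
    then show ?thesis using L R Br_braid[OF a2(3,4)] by (simp add: uvd)
  qed
qed


definition Em :: "nat \<Rightarrow> (nat \<times> nat \<times> 'a::ring) word set \<Rightarrow> (nat \<times> nat \<times> 'a) word set \<times> nat word set" where
  "Em n s = (s, \<one>\<^bsub>Br n\<^esub>)"

definition Bm :: "nat \<Rightarrow> nat word set \<Rightarrow> (nat \<times> nat \<times> 'a::ring) word set \<times> nat word set" where
  "Bm n b = (\<one>\<^bsub>St n\<^esub>, b)"

lemma Em_hom: "Em n \<in> hom (St n) (StBr n :: ((nat \<times> nat \<times> 'a::ring) word set \<times> nat word set) monoid)"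
proof -
  interpret B: group "Br n" by (rule group_Br)
  show ?thesis
    by (rule homI) (auto simp: Em_def StBr_carrier StBr_mult perm_braid_one st_act_id)
qed

lemma Bm_hom: "(Bm n :: _ \<Rightarrow> (nat \<times> nat \<times> 'a::ring) word set \<times> nat word set) \<in> hom (Br n) (StBr n)"
proof -
  interpret S: group "St n :: (nat \<times> nat \<times> 'a) word set monoid" by (rule group_St)
  show ?thesis
    by (rule homI) (auto simp: Bm_def StBr_carrier StBr_mult st_act_one good_braid)
qed

lemma EB: "s \<in> carrier (St n) \<Longrightarrow> b \<in> carrier (Br n) \<Longrightarrow>
    Em n s \<otimes>\<^bsub>StBr n\<^esub> Bm n b = (s :: (nat \<times> nat \<times> 'a::ring) word set, b)"
proof -
  interpret S: group "St n :: (nat \<times> nat \<times> 'a) word set monoid" by (rule group_St)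
  interpret B: group "Br n" by (rule group_Br)
  show "s \<in> carrier (St n) \<Longrightarrow> b \<in> carrier (Br n) \<Longrightarrow> Em n s \<otimes>\<^bsub>StBr n\<^esub> Bm n b = (s, b)"
    by (simp add: Em_def Bm_def StBr_mult perm_braid_one st_act_id)
qed

lemma BE: "s \<in> carrier (St n) \<Longrightarrow> b \<in> carrier (Br n) \<Longrightarrow>
    Bm n b \<otimes>\<^bsub>StBr n\<^esub> Em n s = Em n (st_act n (perm_of_braid b) (s :: (nat \<times> nat \<times> 'a::ring) word set)) \<otimes>\<^bsub>StBr n\<^esub> Bm n b"
proof -
  interpret S: group "St n :: (nat \<times> nat \<times> 'a) word set monoid" by (rule group_St)
  interpret B: group "Br n" by (rule group_Br)
  show "s \<in> carrier (St n) \<Longrightarrow> b \<in> carrier (Br n) \<Longrightarrow>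
    Bm n b \<otimes>\<^bsub>StBr n\<^esub> Em n s = Em n (st_act n (perm_of_braid b) s) \<otimes>\<^bsub>StBr n\<^esub> Bm n b"
    by (simp add: Em_def Bm_def StBr_mult perm_braid_one st_act_id st_act_carrier good_braid st_act_one)
qed

abbreviation yy :: "nat \<Rightarrow> nat \<Rightarrow> 'a::ring \<Rightarrow> (nat \<times> 'a) word set" where
  "yy n i a \<equiv> gen (brA_gens n) (brA_rels n) (i, a)"

lemma gen2: "u1 \<in> brA_gens n \<Longrightarrow> u2 \<in> brA_gens n \<Longrightarrow>
  gen (brA_gens n) (brA_rels n) u1 \<otimes>\<^bsub>BrA n\<^esub> gen (brA_gens n) (brA_rels n) u2 =
  word_class (brA_gens n) (brA_rels n) [(u1, True), (u2, True :: bool)]"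
  for u1 u2 :: "nat \<times> 'a::ring"
  unfolding BrA_pres gen_def by (subst mult_class) auto

lemma gen3: "u1 \<in> brA_gens n \<Longrightarrow> u2 \<in> brA_gens n \<Longrightarrow> u3 \<in> brA_gens n \<Longrightarrow>
  gen (brA_gens n) (brA_rels n) u1 \<otimes>\<^bsub>BrA n\<^esub> gen (brA_gens n) (brA_rels n) u2
    \<otimes>\<^bsub>BrA n\<^esub> gen (brA_gens n) (brA_rels n) u3 =
  word_class (brA_gens n) (brA_rels n) [(u1, True), (u2, True), (u3, True :: bool)]"
  for u1 u2 u3 :: "nat \<times> 'a::ring"
  unfolding BrA_pres gen_def by (subst mult_class, simp, simp, subst mult_class) auto

lemma brA_inst: "brA_grp (BrA n :: (nat \<times> 'a::ring) word set monoid) n (yy n)"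
proof -
  have lg: "\<And>i a. 1 \<le> i \<Longrightarrow> i \<le> n - 1 \<Longrightarrow> [((i, a), True)] \<in> lists (brA_gens n \<times> UNIV)"
    by (auto simp: brA_gens_def)
  have m2: "\<And>u v. u \<in> lists (brA_gens n \<times> UNIV) \<Longrightarrow> v \<in> lists (brA_gens n \<times> UNIV) \<Longrightarrow>
    word_class (brA_gens n) (brA_rels n) u \<otimes>\<^bsub>BrA n\<^esub> word_class (brA_gens n) (brA_rels n) v =
    word_class (brA_gens n) (brA_rels n) (u @ v :: (nat \<times> 'a) word)"
    unfolding BrA_pres by (rule mult_class)
  have rl: "\<And>u v. (u, v) \<in> brA_rels n \<Longrightarrow> u \<in> lists (brA_gens n \<times> UNIV) \<Longrightarrow> v \<in> lists (brA_gens n \<times> UNIV) \<Longrightarrow>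
     word_class (brA_gens n) (brA_rels n) u = word_class (brA_gens n) (brA_rels n) (v :: (nat \<times> 'a) word)"
    by (rule word_class_eqI, rule pres_eq.rel)
  show ?thesis
  proof (rule brA_grp.intro[OF group_BrA], rule brA_grp_axioms.intro)
    fix i :: nat and a :: 'a assume "1 \<le> i" "i \<le> n - 1"
    then show "yy n i a \<in> carrier (BrA n)"
      unfolding BrA_pres gen_def by (intro class_in_carrier lg)
  next
    fix i :: nat and a b :: 'a assume i: "1 \<le> i" "i \<le> n - 1"
    have r: "([((i, a), True), ((i, 0), True), ((i, b), True)],
       [((i, 0), True), ((i, 0), True), ((i, a + b), True)]) \<in> brA_rels n"
      using i unfolding brA_rels_def by blast
    show "yy n i a \<otimes>\<^bsub>BrA n\<^esub> yy n i 0 \<otimes>\<^bsub>BrA n\<^esub> yy n i b =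
        yy n i 0 \<otimes>\<^bsub>BrA n\<^esub> yy n i 0 \<otimes>\<^bsub>BrA n\<^esub> yy n i (a + b)"
      using i rl[OF r] by (subst (1 2) gen3) (auto simp: brA_gens_def)
  next
    fix i j :: nat and a b :: 'a
    assume i: "1 \<le> i" "i \<le> n - 1" "1 \<le> j" "j \<le> n - 1" "i + 2 \<le> j \<or> j + 2 \<le> i"
    have r: "([((i, a), True), ((j, b), True)], [((j, b), True), ((i, a), True)]) \<in> brA_rels n"
      using i unfolding brA_rels_def by blast
    show "yy n i a \<otimes>\<^bsub>BrA n\<^esub> yy n j b = yy n j b \<otimes>\<^bsub>BrA n\<^esub> yy n i a"
      using i rl[OF r] by (subst (1 2) gen2) (auto simp: brA_gens_def)
  next
    fix i :: nat and a b c :: 'a assume i: "1 \<le> i" "i + 1 \<le> n - 1"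
    have r: "([((i, a), True), ((i + 1, b), True), ((i, c), True)],
        [((i + 1, c), True), ((i, b + a * c), True), ((i + 1, a), True)]) \<in> brA_rels n"
      using i unfolding brA_rels_def by blast
    have l2: "\<And>a. [((i + 1, a), True)] \<in> lists (brA_gens n \<times> UNIV)" using i by (auto simp: brA_gens_def)
    show "yy n i a \<otimes>\<^bsub>BrA n\<^esub> yy n (i + 1) b \<otimes>\<^bsub>BrA n\<^esub> yy n i c =
        yy n (i + 1) c \<otimes>\<^bsub>BrA n\<^esub> yy n i (b + a * c) \<otimes>\<^bsub>BrA n\<^esub> yy n (i + 1) a"
      using i rl[OF r] by (subst (1 2) gen3) (auto simp: brA_gens_def)
  qed
qed


theorem theorem2p8:
  fixes n :: nat
  assumes "n \<ge> 2"
  shows "(\<forall>(u, v) \<in> brA_rels n.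
            word_eval (StBr n) (phi_gen n) u = word_eval (StBr n) (phi_gen n) (v :: (nat \<times> 'a::ring) word))
         \<and> phi n \<in> iso (BrA n :: (nat \<times> 'a) word set monoid) (StBr n)"
proof -
  have R: "\<forall>(u, v) \<in> brA_rels n.
            word_eval (StBr n) (phi_gen n) u = word_eval (StBr n) (phi_gen n) (v :: (nat \<times> 'a::ring) word)"
    by (rule phi_rels)
  interpret B: brA_grp "BrA n :: (nat \<times> 'a) word set monoid" n "yy n" by (rule brA_inst)
  interpret H: group "StBr n :: ((nat \<times> nat \<times> 'a) word set \<times> nat word set) monoid" by (rule group_StBr)
  interpret S: group "St n :: (nat \<times> nat \<times> 'a) word set monoid" by (rule group_St)
  interpret Bg: group "Br n" by (rule group_Br)
  have gimg: "phi_gen n ` brA_gens n \<subseteq> carrier (StBr n :: ((nat \<times> nat \<times> 'a) word set \<times> nat word set) monoid)"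
    using phi_gen_carrier by (auto simp: brA_gens_def)
  have rels: "rels_hold (StBr n :: ((nat \<times> nat \<times> 'a) word set \<times> nat word set) monoid) (phi_gen n) (brA_gens n) (brA_rels n)"
    using R unfolding rels_hold_def by blast
  have phi_eq: "(phi n :: _ \<Rightarrow> (nat \<times> nat \<times> 'a) word set \<times> nat word set) = pres_map (StBr n) (phi_gen n)"
    by (simp add: phi_def pres_map_def fun_eq_iff)
  have phi_hom: "(phi n :: _ \<Rightarrow> (nat \<times> nat \<times> 'a) word set \<times> nat word set) \<in> hom (BrA n) (StBr n)"
    unfolding phi_eq BrA_pres by (rule pres_map_hom[OF group_StBr gimg rels])
  interpret PH: group_hom "BrA n :: (nat \<times> 'a) word set monoid" "StBr n :: ((nat \<times> nat \<times> 'a) word set \<times> nat word set) monoid" "phi n"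
    by (simp add: group_hom_def group_hom_axioms_def phi_hom B.is_group H.is_group)
  have phi_class: "\<And>w. w \<in> lists (brA_gens n \<times> UNIV) \<Longrightarrow>
      phi n (word_class (brA_gens n) (brA_rels n) w) = word_eval (StBr n) (phi_gen n) (w :: (nat \<times> 'a) word)"
    unfolding phi_eq by (rule pres_map_class[OF group_StBr gimg rels])
  have phi_y: "phi n (yy n i a) = phi_gen n (i, a)" if i: "1 \<le> i" "i \<le> n - 1" for i and a :: 'a
  proof -
    have "[((i, a), True)] \<in> lists (brA_gens n \<times> UNIV)" using i by (auto simp: brA_gens_def)
    then show ?thesis using phi_class phi_gen_carrier[OF i, of a] by (simp add: gen_def)
  qed
  have left: "B.psi (phi n g) = g" if g: "g \<in> carrier (BrA n)" for g
  proof -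
    obtain w where w: "w \<in> lists (brA_gens n \<times> UNIV)" "g = word_class (brA_gens n) (brA_rels n) w"
      using g unfolding BrA_pres by (rule carrier_presE)
    have "B.psi (phi n g) = B.psi (word_eval (StBr n) (phi_gen n) w)" using w phi_class by simp
    also have "\<dots> = word_eval (BrA n) (B.psi \<circ> phi_gen n) w"
      by (rule hom_word_eval[OF group_StBr group_BrA B.psi_hom gimg w(1)])
    also have "\<dots> = word_eval (BrA n) (gen (brA_gens n) (brA_rels n)) w"
    proof (rule word_eval_cong[OF _ w(1)])
      fix x :: "nat \<times> 'a" assume "x \<in> brA_gens n"
      then obtain i a where x: "x = (i, a)" "1 \<le> i" "i \<le> n - 1" by (auto simp: brA_gens_def)
      have l1: "[((i, i + 1, a), True)] \<in> lists (st_gens n \<times> UNIV)" using x by (auto simp: st_gens_def)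
      have l2: "[(i, True)] \<in> lists (br_gens n \<times> UNIV)" using x by (auto simp: br_gens_def)
      have yc: "B.Yf a i (i + 1) \<in> carrier (BrA n)" using x by (intro B.Yf_closed) auto
      have e1: "B.psiSt (xs n i (i + 1) a) = B.X i a"
        using B.psiSt_class[OF l1] yc by (simp add: B.Yf_def)
      have e2: "B.psiBr (yb n i) = B.t i"
        using B.psiBr_class[OF l2] x by (simp add: B.tw_def)
      have "B.psi (phi_gen n (i, a)) = B.X i a \<otimes>\<^bsub>BrA n\<^esub> B.t i"
        using x e1 e2 by (simp add: phi_gen_eq B.psi_def)
      also have "\<dots> = yy n i a" using B.y_X[OF x(2,3), of a] by simp
      finally show "(B.psi \<circ> phi_gen n) x = gen (brA_gens n) (brA_rels n) x" using x by simp
    qed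
    also have "\<dots> = g" using w word_eval_gen[OF w(1), of "brA_rels n"] by (simp add: BrA_pres)
    finally show ?thesis .
  qed
  have phi_t: "phi n (B.t i) = Bm n (yb n i)" if i: "1 \<le> i" "i \<le> n - 1" for i
  proof -
    have "phi n (B.t i) = phi_gen n (i, 0)" using phi_y[OF i, of 0] by (simp add: B.t_def)
    also have "\<dots> = Bm n (yb n i)" using i xs_zero[of i n "i + 1", where 'a='a]
      by (simp add: phi_gen_eq Bm_def)
    finally show ?thesis .
  qed
  have genBr: "gen (br_gens n) (br_rels n) ` br_gens n \<subseteq> carrier (Br n)"
    unfolding Br_pres gen_def by (auto intro: class_in_carrier)
  have phi_tw: "phi n (B.tw w) = Bm n (brc n w)" if w: "w \<in> lists (br_gens n \<times> UNIV)" for w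
  proof -
    have "phi n (B.tw w) = word_eval (StBr n) (phi n \<circ> B.t) w"
      unfolding B.tw_def by (rule hom_word_eval[OF group_BrA group_StBr phi_hom B.t_image w])
    also have "\<dots> = word_eval (StBr n) (Bm n \<circ> gen (br_gens n) (br_rels n)) w"
    proof (rule word_eval_cong[OF _ w])
      fix i assume "i \<in> br_gens n"
      then show "(phi n \<circ> B.t) i = (Bm n \<circ> gen (br_gens n) (br_rels n)) i"
        using phi_t by (auto simp: br_gens_def gen_def)
    qed
    also have "\<dots> = Bm n (word_eval (Br n) (gen (br_gens n) (br_rels n)) w)"
      by (rule hom_word_eval[OF group_Br group_StBr Bm_hom genBr w, symmetric])
    also have "\<dots> = Bm n (brc n w)" using word_eval_gen[OF w] by (simp add: Br_pres)
    finally show ?thesis .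
  qed
  have phi_Y: "phi n (B.Yf a i j) = Em n (xs n i j a)"
    if ij: "1 \<le> i" "i \<le> n" "1 \<le> j" "j \<le> n" "i \<noteq> j" for i j and a :: 'a
  proof -
    obtain w where w: "w \<in> lists (br_gens n \<times> UNIV)"
      "\<forall>p < length [i, j]. perm_of_word w (p + 1) = [i, j] ! p"
      using realize[of "[i, j]" n] ij by auto
    have p: "perm_of_word w 1 = i" "perm_of_word w 2 = j" using w(2)[rule_format, of 0] w(2)[rule_format, of 1]
      by (auto simp: numeral_2_eq_2)
    have n2: "1 \<le> (1::nat)" "1 \<le> n - 1" "1 \<le> (2::nat)" "2 \<le> n" "(1::nat) \<noteq> 2" using assms by auto
    have Y12: "B.Yf a 1 2 = B.X 1 a" by (simp add: B.Yf_def)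
    have "B.cj (B.tw w) (B.Yf a 1 2) = B.Yf a i j"
      using B.TL[OF w(1), of 1 2 a] n2 assms p by simp
    then have e: "B.Yf a i j = B.cj (B.tw w) (B.X 1 a)" using Y12 by simp
    have tc: "B.tw w \<in> carrier (BrA n)" using B.tw_closed[OF w(1)] .
    have xc: "B.X 1 a \<in> carrier (BrA n)" using n2 by simp
    have tc1: "B.t 1 \<in> carrier (BrA n)" using n2 by simp
    have g: "good n (perm_of_word w)" using good_perm[OF w(1)] .
    have bc: "brc n w \<in> carrier (Br n)" using w(1) unfolding Br_pres by (rule class_in_carrier)
    have y1c: "yb n 1 \<in> carrier (Br n)" using n2 by (intro yb_carrier) auto
    have x12c: "(xs n 1 2 a :: (nat \<times> nat \<times> 'a) word set) \<in> carrier (St n)" using n2 by (intro xs_carrier) auto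
    have phiX: "phi n (B.X 1 a) = Em n (xs n 1 2 a)"
    proof -
      have "phi n (B.X 1 a) = phi n (yy n 1 a) \<otimes>\<^bsub>StBr n\<^esub> inv\<^bsub>StBr n\<^esub> (phi n (B.t 1))"
        using n2 tc1 by (simp add: B.X_def B.y_closed)
      also have "\<dots> = (Em n (xs n 1 2 a) \<otimes>\<^bsub>StBr n\<^esub> Bm n (yb n 1)) \<otimes>\<^bsub>StBr n\<^esub> inv\<^bsub>StBr n\<^esub> (Bm n (yb n 1))"
        using phi_y[of 1 a] phi_t[of 1] n2 phi_gen_eq[of 1 n a] EB[OF x12c y1c] by (simp add: numeral_2_eq_2)
      also have "\<dots> = Em n (xs n 1 2 a)"
        using hom_in_carrier[OF Em_hom x12c] hom_in_carrier[OF Bm_hom[where 'a='a] y1c] by (simp add: H.inv_cancel3)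
      finally show ?thesis .
    qed
    have "phi n (B.Yf a i j) = phi n (B.tw w) \<otimes>\<^bsub>StBr n\<^esub> phi n (B.X 1 a) \<otimes>\<^bsub>StBr n\<^esub> inv\<^bsub>StBr n\<^esub> (phi n (B.tw w))"
      using e tc xc by (simp add: B.cj_def)
    also have "\<dots> = Bm n (brc n w) \<otimes>\<^bsub>StBr n\<^esub> Em n (xs n 1 2 a) \<otimes>\<^bsub>StBr n\<^esub> inv\<^bsub>StBr n\<^esub> (Bm n (brc n w))"
      using phiX phi_tw[OF w(1)] by simp
    also have "\<dots> = Em n (st_act n (perm_of_braid (brc n w)) (xs n 1 2 a)) \<otimes>\<^bsub>StBr n\<^esub> Bm n (brc n w)
        \<otimes>\<^bsub>StBr n\<^esub> inv\<^bsub>StBr n\<^esub> (Bm n (brc n w))"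
      using BE[OF x12c bc] by simp
    also have "\<dots> = Em n (st_act n (perm_of_braid (brc n w)) (xs n 1 2 a))"
      using hom_in_carrier[OF Em_hom st_act_carrier[OF good_braid[OF bc] x12c]] hom_in_carrier[OF Bm_hom[where 'a='a] bc]
      by (simp add: H.m_assoc)
    also have "\<dots> = Em n (xs n i j a)"
      using perm_braid_class[OF w(1)] st_act_gen[OF g, of 1 2 a] n2 p by (simp add: st_gens_def)
    finally show ?thesis .
  qed
  have genSt: "gen (st_gens n) (st_rels n) ` st_gens n \<subseteq> carrier (St n :: (nat \<times> nat \<times> 'a) word set monoid)"
    unfolding St_pres gen_def by (auto intro: class_in_carrier)
  have phi_psiSt: "phi n (B.psiSt s) = Em n s" if s: "s \<in> carrier (St n)" for s
  proof -
    obtain u where u: "u \<in> lists (st_gens n \<times> UNIV)" "s = stc n u" using s by (rule St_carrierE)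
    have "phi n (B.psiSt s) = phi n (word_eval (BrA n) (\<lambda>(i, j, a). B.Yf a i j) u)"
      using u B.psiSt_class by simp
    also have "\<dots> = word_eval (StBr n) (phi n \<circ> (\<lambda>(i, j, a). B.Yf a i j)) u"
      by (rule hom_word_eval[OF group_BrA group_StBr phi_hom B.Y_image u(1)])
    also have "\<dots> = word_eval (StBr n) (Em n \<circ> gen (st_gens n) (st_rels n)) u"
    proof (rule word_eval_cong[OF _ u(1)])
      fix x :: "nat \<times> nat \<times> 'a" assume "x \<in> st_gens n"
      then obtain i j a where x: "x = (i, j, a)" "1 \<le> i" "i \<le> n" "1 \<le> j" "j \<le> n" "i \<noteq> j"
        by (auto simp: st_gens_def)
      then show "(phi n \<circ> (\<lambda>(i, j, a). B.Yf a i j)) x = (Em n \<circ> gen (st_gens n) (st_rels n)) x"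
        using phi_Y by (simp add: gen_def)
    qed
    also have "\<dots> = Em n (word_eval (St n) (gen (st_gens n) (st_rels n)) u)"
      by (rule hom_word_eval[OF group_St group_StBr Em_hom genSt u(1), symmetric])
    also have "\<dots> = Em n s" using word_eval_gen[OF u(1)] u by (simp add: St_pres)
    finally show ?thesis .
  qed
  have phi_psiBr: "phi n (B.psiBr b) = Bm n b" if b: "b \<in> carrier (Br n)" for b
  proof -
    obtain v where v: "v \<in> lists (br_gens n \<times> UNIV)" "b = brc n v" using b by (rule Br_carrierE)
    then show ?thesis using B.psiBr_class phi_tw by simp
  qed
  have right: "phi n (B.psi h) = h" if h: "h \<in> carrier (StBr n)" for h
  proof -
    obtain s b where sb: "h = (s, b)" "s \<in> carrier (St n)" "b \<in> carrier (Br n)"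
      using h by (auto simp: StBr_carrier)
    have c: "B.psiSt s \<in> carrier (BrA n)" "B.psiBr b \<in> carrier (BrA n)"
      using sb hom_in_carrier[OF B.psiSt_hom] hom_in_carrier[OF B.psiBr_hom] by auto
    have "phi n (B.psi h) = phi n (B.psiSt s) \<otimes>\<^bsub>StBr n\<^esub> phi n (B.psiBr b)"
      using sb c by (simp add: B.psi_def)
    also have "\<dots> = h" using sb phi_psiSt phi_psiBr EB by simp
    finally show ?thesis .
  qed
  have bij: "bij_betw (phi n) (carrier (BrA n)) (carrier (StBr n :: ((nat \<times> nat \<times> 'a) word set \<times> nat word set) monoid))"
    by (rule bij_betw_byWitness[where f' = B.psi])
       (use left right hom_carrier[OF phi_hom] hom_carrier[OF B.psi_hom] in auto)
  show ?thesis using R phi_hom bij unfolding iso_def by blast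
qed


end
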